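(* Let $p\geq1$ and let $l,y,l',y'\in D(\mathbb{R}^+,\mathbb{R}^d)$ be such that $l_0\leq y_0$ and $l'_0\leq y'_0$. Let $(x,k)=SP_l(y)$ and $(x',k')=SP_{l'}(y')$. Then for every $T\in\mathbb{R}^+$, \[ \bar V_p(x-x')_T\leq(d+1)\bar V_p(y-y')_T+d\bar V_p(l-l')_T \] and \[ \bar V_p(k-k')_T\leq d\bar V_p(y-y')_T+d\bar V_p(l-l')_T. \]
   Context: $\mathbb{R}^+=[0,\infty)$; $D(\mathbb{R}^+,\mathbb{R}^d)$ is the space of càdlàg functions $\mathbb{R}^+\to\mathbb{R}^d$. For such $x$, $v_p(x)_{[a,b]}=\sup\sum_{i=1}^n|x_{t_i}-x_{t_{i-1}}|^p$ over subdivisions $a=t_0<\dots<t_n=b$ ($|\cdot|$ Euclidean norm), $V_p(x)_{[a,b]}=(v_p(x)_{[a,b]})^{1/p}$, $\bar V_p(x)_{[a,b]}=V_p(x)_{[a,b]}+|x_a|$, and $\bar V_p(x)_T=\bar V_p(x)_{[0,T]}$. Inequalities between vectors/functions are componentwise (and for all $t$). Skorokhod problem: given $y,l\in D(\mathbb{R}^+,\mathbb{R}^d)$ with $l_0\leq y_0$, $(x,k)=SP_l(y)$ means $x,k\in D(\mathbb{R}^+,\mathbb{R}^d)$, (i) $x_t=y_t+k_t\geq l_t$ for all $t$; (ii) $k_0=0$, each $k^i$ is nondecreasing and $\int_0^t(x^i_s-l^i_s)\,dk^i_s=0$ for all $t$, $i=1,\dots,d$. *)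

theory Defs
  imports "HOL-Analysis.Analysis"
begin

text \<open>Paths R^+ -> R^d are functions real => real^'d; only values at t >= 0 matter.
  The dimension d is CARD('d).\<close>

definition cadlag :: "(real \<Rightarrow> 'a::topological_space) \<Rightarrow> bool" where
  "cadlag f \<longleftrightarrow>
     (\<forall>t\<ge>0. (f \<longlongrightarrow> f t) (at_right t)) \<and>
     (\<forall>t>0. \<exists>L. (f \<longlongrightarrow> L) (at_left t))"

definition subdivision :: "real \<Rightarrow> real \<Rightarrow> real list \<Rightarrow> bool" where
  "subdivision a b ts \<longleftrightarrow> ts \<noteq> [] \<and> hd ts = a \<and> last ts = b \<and> sorted_wrt (<) ts"

definition var_sum :: "real \<Rightarrow> (real \<Rightarrow> 'a::real_normed_vector) \<Rightarrow> real list \<Rightarrow> real" where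
  "var_sum p x ts = (\<Sum>i<length ts - 1. norm (x (ts ! Suc i) - x (ts ! i)) powr p)"

definition pvar :: "real \<Rightarrow> (real \<Rightarrow> 'a::real_normed_vector) \<Rightarrow> real \<Rightarrow> real \<Rightarrow> ennreal" where
  "pvar p x a b = (SUP ts\<in>{ts. subdivision a b ts}. ennreal (var_sum p x ts))"

definition Vp :: "real \<Rightarrow> (real \<Rightarrow> 'a::real_normed_vector) \<Rightarrow> real \<Rightarrow> real \<Rightarrow> ennreal" where
  "Vp p x a b = (if pvar p x a b = \<infinity> then \<infinity> else ennreal (enn2real (pvar p x a b) powr (1 / p)))"

definition Vp_bar :: "real \<Rightarrow> (real \<Rightarrow> 'a::real_normed_vector) \<Rightarrow> real \<Rightarrow> real \<Rightarrow> ennreal" where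
  "Vp_bar p x a b = Vp p x a b + ennreal (norm (x a))"

text \<open>The integral int_0^t (x^i - l^i) dk^i is the
  Lebesgue-Stieltjes integral over [0,t] w.r.t. the measure of the nondecreasing
  right-continuous function k^i (extended by k^i_0 = 0 to the left of 0).\<close>
definition SP :: "(real \<Rightarrow> real^'d) \<Rightarrow> (real \<Rightarrow> real^'d) \<Rightarrow> (real \<Rightarrow> real^'d) \<Rightarrow> (real \<Rightarrow> real^'d) \<Rightarrow> bool" where
  "SP l y x k \<longleftrightarrow> cadlag x \<and> cadlag k \<and>
     (\<forall>t\<ge>0. x t = y t + k t \<and> (\<forall>i. l t $ i \<le> x t $ i)) \<and>
     k 0 = 0 \<and>
     (\<forall>i. mono_on {0..} (\<lambda>t. k t $ i)) \<and>
     (\<forall>i. \<forall>t\<ge>0. (LINT s:{0..t}|interval_measure (\<lambda>s. k (max 0 s) $ i). x s $ i - l s $ i) = 0)"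

end

theory Submission
  imports Defs
begin

lemma powr_le_self_unit:
  fixes l p :: real assumes "0 \<le> l" "l \<le> 1" "p \<ge> 1"
  shows "l powr p \<le> l"
proof (cases "l = 0")
  case True then show ?thesis by simp
next
  case False
  then have "l powr p \<le> l powr 1" using assms by (intro powr_mono') auto
  then show ?thesis using False assms by simp
qed

lemma conv_pow:
  fixes a b l p :: real
  assumes p: "p \<ge> 1" and a: "a \<ge> 0" and b: "b \<ge> 0" and l: "0 \<le> l" "l \<le> 1"
  shows "((1 - l) * a + l * b) powr p \<le> (1 - l) * a powr p + l * b powr p"
proof (cases "a > 0 \<and> b > 0")
  case True
  then show ?thesis using convex_onD[OF powr_convex[OF p], of l a b] l by simp
next
  case False
  then have "a = 0 \<or> b = 0" using a b by auto
  then show ?thesis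
  proof
    assume "a = 0"
    then have "((1 - l) * a + l * b) powr p = l powr p * b powr p" using l b by (simp add: powr_mult)
    also have "\<dots> \<le> l * b powr p" using powr_le_self_unit[OF l p] by (intro mult_right_mono) auto
    finally show ?thesis using \<open>a = 0\<close> p by simp
  next
    assume "b = 0"
    then have "((1 - l) * a + l * b) powr p = (1 - l) powr p * a powr p" using l a by (simp add: powr_mult)
    also have "\<dots> \<le> (1 - l) * a powr p" using powr_le_self_unit[of "1 - l" p] l p by (intro mult_right_mono) auto
    finally show ?thesis using \<open>b = 0\<close> p by simp
  qed
qed

lemma sum_powr_zero_imp:
  fixes x :: "'i \<Rightarrow> real"
  assumes "finite I" "\<And>i. i \<in> I \<Longrightarrow> x i \<ge> 0" "(\<Sum>i\<in>I. x i powr p) = 0" "i \<in> I"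
  shows "x i = 0"
proof -
  have "\<forall>i\<in>I. x i powr p = 0" using sum_nonneg_eq_0_iff[of I "\<lambda>i. x i powr p"] assms by auto
  then show ?thesis using assms(4) by simp
qed

lemma minkowski:
  fixes x y :: "'i \<Rightarrow> real" and p :: real
  assumes I: "finite I" and p: "p \<ge> 1" and x: "\<And>i. i \<in> I \<Longrightarrow> x i \<ge> 0" and y: "\<And>i. i \<in> I \<Longrightarrow> y i \<ge> 0"
  shows "(\<Sum>i\<in>I. (x i + y i) powr p) powr (1/p)
         \<le> (\<Sum>i\<in>I. x i powr p) powr (1/p) + (\<Sum>i\<in>I. y i powr p) powr (1/p)"
proof -
  define SX where "SX = (\<Sum>i\<in>I. x i powr p)"
  define SY where "SY = (\<Sum>i\<in>I. y i powr p)"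
  define X where "X = SX powr (1/p)"
  define Y where "Y = SY powr (1/p)"
  have SX0: "SX \<ge> 0" unfolding SX_def by (intro sum_nonneg) auto
  have SY0: "SY \<ge> 0" unfolding SY_def by (intro sum_nonneg) auto
  have XP: "X powr p = SX" unfolding X_def using SX0 p by (simp add: powr_powr)
  have YP: "Y powr p = SY" unfolding Y_def using SY0 p by (simp add: powr_powr)
  have X0: "X \<ge> 0" "Y \<ge> 0" unfolding X_def Y_def by auto
  show ?thesis
  proof (cases "SX = 0")
    case True
    then have "\<And>i. i \<in> I \<Longrightarrow> x i = 0" using sum_powr_zero_imp[of I x p] I x unfolding SX_def by blast
    then have "(\<Sum>i\<in>I. (x i + y i) powr p) = SY" unfolding SY_def by (intro sum.cong) auto
    then show ?thesis using True unfolding SX_def[symmetric] SY_def[symmetric] by simp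
  next
    case FX: False
    show ?thesis
    proof (cases "SY = 0")
      case True
      then have "\<And>i. i \<in> I \<Longrightarrow> y i = 0" using sum_powr_zero_imp[of I y p] I y unfolding SY_def by blast
      then have "(\<Sum>i\<in>I. (x i + y i) powr p) = SX" unfolding SX_def by (intro sum.cong) auto
      then show ?thesis using True unfolding SX_def[symmetric] SY_def[symmetric] by simp
    next
      case FY: False
      have Xp: "X > 0" unfolding X_def using FX SX0 by auto
      have Yp: "Y > 0" unfolding Y_def using FY SY0 by auto
      define l where "l = Y / (X + Y)"
      have l: "0 \<le> l" "l \<le> 1" unfolding l_def using Xp Yp by auto
      have eq: "x i + y i = (X + Y) * ((1 - l) * (x i / X) + l * (y i / Y))" for i
      proof -
        have XY: "X + Y > 0" using Xp Yp by simp
        have "1 - l = X / (X + Y)" unfolding l_def using XY by (simp add: field_simps)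
        then have "(1 - l) * (x i / X) + l * (y i / Y) = x i / (X + Y) + y i / (X + Y)"
          unfolding l_def using Xp Yp by simp
        then show ?thesis unfolding add_divide_distrib[symmetric] using XY by simp
      qed
      have "(\<Sum>i\<in>I. (x i + y i) powr p)
          = (\<Sum>i\<in>I. (X + Y) powr p * ((1 - l) * (x i / X) + l * (y i / Y)) powr p)"
      proof (intro sum.cong refl)
        fix i assume i: "i \<in> I"
        have "0 \<le> (1 - l) * (x i / X) + l * (y i / Y)" using l x[OF i] y[OF i] Xp Yp by simp
        then show "(x i + y i) powr p = (X + Y) powr p * ((1 - l) * (x i / X) + l * (y i / Y)) powr p"
          by (subst eq) (use Xp Yp in \<open>simp add: powr_mult\<close>)
      qed
      also have "\<dots> \<le> (\<Sum>i\<in>I. (X + Y) powr p * ((1 - l) * (x i / X) powr p + l * (y i / Y) powr p))"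
      proof (intro sum_mono mult_left_mono)
        fix i assume i: "i \<in> I"
        show "((1 - l) * (x i / X) + l * (y i / Y)) powr p \<le> (1 - l) * (x i / X) powr p + l * (y i / Y) powr p"
          using conv_pow[OF p _ _ l, of "x i / X" "y i / Y"] x[OF i] y[OF i] Xp Yp by simp
      qed simp
      also have "\<dots> = (X + Y) powr p * ((1 - l) * (SX / X powr p) + l * (SY / Y powr p))"
        unfolding SX_def SY_def
        using x y Xp Yp by (simp add: sum_distrib_left sum_distrib_right sum.distrib powr_divide sum_divide_distrib[symmetric] algebra_simps)
      also have "\<dots> = (X + Y) powr p" using XP YP FX FY by simp
      finally have "(\<Sum>i\<in>I. (x i + y i) powr p) \<le> (X + Y) powr p" .
      then have "(\<Sum>i\<in>I. (x i + y i) powr p) powr (1/p) \<le> ((X + Y) powr p) powr (1/p)"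
        using p by (intro powr_mono2) (auto intro!: sum_nonneg)
      also have "\<dots> = X + Y" using Xp Yp p by (simp add: powr_powr)
      finally show ?thesis unfolding X_def Y_def SX_def SY_def .
    qed
  qed
qed

lemma superadd_powr:
  fixes x y p :: real assumes "x \<ge> 0" "y \<ge> 0" "p \<ge> 1"
  shows "x powr p + y powr p \<le> (x + y) powr p"
proof (cases "x + y = 0")
  case True then have "x = 0" "y = 0" using assms by auto
  then show ?thesis using assms by simp
next
  case False
  define s where "s = x + y"
  have s: "s > 0" using False assms unfolding s_def by simp
  have "x powr p = s powr p * (x / s) powr p" using s assms by (simp add: powr_divide)
  also have "\<dots> \<le> s powr p * (x / s)" using s assms
    by (intro mult_left_mono powr_le_self_unit) (auto simp: s_def)
  finally have 1: "x powr p \<le> s powr p * (x / s)" .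
  have "y powr p = s powr p * (y / s) powr p" using s assms by (simp add: powr_divide)
  also have "\<dots> \<le> s powr p * (y / s)" using s assms
    by (intro mult_left_mono powr_le_self_unit) (auto simp: s_def)
  finally have 2: "y powr p \<le> s powr p * (y / s)" .
  have xy1: "x / s + y / s = 1" using s unfolding add_divide_distrib[symmetric] by (simp add: s_def)
  have "s powr p * (x / s) + s powr p * (y / s) = s powr p * (x / s + y / s)"
    by (simp only: distrib_left)
  then have "s powr p * (x / s) + s powr p * (y / s) = s powr p" using xy1 by simp
  then show ?thesis using 1 2 unfolding s_def by linarith
qed

definition psum :: "real \<Rightarrow> (real \<Rightarrow> real \<Rightarrow> real) \<Rightarrow> real list \<Rightarrow> real" where
  "psum p \<phi> L = (\<Sum>i<length L - 1. \<phi> (L!i) (L!Suc i) powr p)"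

lemma psum_Nil[simp]: "psum p \<phi> [] = 0" and psum_single[simp]: "psum p \<phi> [a] = 0"
  by (auto simp: psum_def)

lemma psum_Cons2: "psum p \<phi> (a#b#r) = \<phi> a b powr p + psum p \<phi> (b#r)"
  unfolding psum_def by (simp only: length_Cons diff_Suc_1 sum.lessThan_Suc_shift) simp

lemma psum_snoc:
  assumes "L \<noteq> []"
  shows "psum p \<phi> (L @ [c]) = psum p \<phi> L + \<phi> (last L) c powr p"
proof -
  obtain n where n: "length L = Suc n" using assms by (cases L) auto
  have "psum p \<phi> (L @ [c]) = (\<Sum>i<Suc n. \<phi> ((L@[c])!i) ((L@[c])!Suc i) powr p)"
    unfolding psum_def using n by simp
  also have "\<dots> = (\<Sum>i<n. \<phi> ((L@[c])!i) ((L@[c])!Suc i) powr p) + \<phi> ((L@[c])!n) ((L@[c])!Suc n) powr p"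
    by simp
  also have "(\<Sum>i<n. \<phi> ((L@[c])!i) ((L@[c])!Suc i) powr p) = psum p \<phi> L"
    unfolding psum_def using n by (intro sum.cong) (auto simp: nth_append)
  also have "(L@[c])!n = last L" using n assms by (simp add: nth_append last_conv_nth)
  also have "(L@[c])!Suc n = c" using n by (simp add: nth_append)
  finally show ?thesis .
qed

lemma psum_nonneg: "psum p \<phi> L \<ge> 0"
  unfolding psum_def by (intro sum_nonneg) auto

lemma psum_mono:
  assumes "\<And>i. Suc i < length L \<Longrightarrow> 0 \<le> \<phi> (L!i) (L!Suc i)"
    and "\<And>i. Suc i < length L \<Longrightarrow> \<phi> (L!i) (L!Suc i) \<le> \<psi> (L!i) (L!Suc i)"
    and "p \<ge> 0"
  shows "psum p \<phi> L \<le> psum p \<psi> L"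
  unfolding psum_def using assms by (intro sum_mono powr_mono2) auto

lemma var_sum_psum: "var_sum p x L = psum p (\<lambda>s t. norm (x t - x s)) L"
  unfolding var_sum_def psum_def by simp

lemma var_sum_cong:
  assumes "\<And>t. t \<in> set ts \<Longrightarrow> u t = v t"
  shows "var_sum p u ts = var_sum p v ts"
  unfolding var_sum_def using assms by (intro sum.cong refl) (auto simp: nth_mem)

lemma var_sum_nonneg: "var_sum p u ts \<ge> 0"
  unfolding var_sum_def by (intro sum_nonneg) auto

lemma psum_minkowski:
  assumes p: "p \<ge> 1" and "\<And>i. Suc i < length L \<Longrightarrow> 0 \<le> \<phi> (L!i) (L!Suc i)"
    and "\<And>i. Suc i < length L \<Longrightarrow> 0 \<le> \<psi> (L!i) (L!Suc i)"
  shows "psum p (\<lambda>s t. \<phi> s t + \<psi> s t) L powr (1/p) \<le> psum p \<phi> L powr (1/p) + psum p \<psi> L powr (1/p)"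
  unfolding psum_def using assms by (intro minkowski) auto

lemma var_sum_triangle:
  fixes u v :: "real \<Rightarrow> 'a::real_normed_vector"
  assumes p: "p \<ge> 1"
  shows "var_sum p (\<lambda>t. u t + v t) ts powr (1/p) \<le> var_sum p u ts powr (1/p) + var_sum p v ts powr (1/p)"
proof -
  have "var_sum p (\<lambda>t. u t + v t) ts \<le> psum p (\<lambda>s t. norm (u t - u s) + norm (v t - v s)) ts"
    unfolding var_sum_psum using p
    by (intro psum_mono) (auto intro: order_trans[OF _ norm_triangle_ineq] simp: algebra_simps)
  then have "var_sum p (\<lambda>t. u t + v t) ts powr (1/p) \<le> psum p (\<lambda>s t. norm (u t - u s) + norm (v t - v s)) ts powr (1/p)"
    using p by (intro powr_mono2) (auto simp: var_sum_nonneg)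
  also have "\<dots> \<le> var_sum p u ts powr (1/p) + var_sum p v ts powr (1/p)"
    unfolding var_sum_psum using p by (intro psum_minkowski) auto
  finally show ?thesis .
qed

lemma var_sum_minus: "var_sum p (\<lambda>t. - u t) ts = var_sum p u ts"
  unfolding var_sum_def by (simp add: norm_minus_commute)

lemma var_sum_comp_le:
  fixes z :: "real \<Rightarrow> real^'d"
  assumes "p \<ge> 0"
  shows "var_sum p (\<lambda>t. z t $ i) ts \<le> var_sum p z ts"
  unfolding var_sum_def using assms
  by (intro sum_mono powr_mono2) (auto simp: component_le_norm_cart[of "z _ - z _" i, simplified])

lemma minkowski_sum:
  fixes b :: "'i \<Rightarrow> 'j \<Rightarrow> real"
  assumes F: "finite F" and J: "finite J" and p: "p \<ge> 1" and nn: "\<And>i j. 0 \<le> b i j"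
  shows "(\<Sum>j\<in>J. (\<Sum>i\<in>F. b i j) powr p) powr (1/p) \<le> (\<Sum>i\<in>F. (\<Sum>j\<in>J. b i j powr p) powr (1/p))"
  using F
proof (induction F rule: finite_induct)
  case empty then show ?case by simp
next
  case (insert a F)
  have "(\<Sum>j\<in>J. (\<Sum>i\<in>insert a F. b i j) powr p) powr (1/p) = (\<Sum>j\<in>J. (b a j + (\<Sum>i\<in>F. b i j)) powr p) powr (1/p)"
    using insert by simp
  also have "\<dots> \<le> (\<Sum>j\<in>J. b a j powr p) powr (1/p) + (\<Sum>j\<in>J. (\<Sum>i\<in>F. b i j) powr p) powr (1/p)"
    using J p nn by (intro minkowski) (auto intro: sum_nonneg)
  also have "\<dots> \<le> (\<Sum>j\<in>J. b a j powr p) powr (1/p) + (\<Sum>i\<in>F. (\<Sum>j\<in>J. b i j powr p) powr (1/p))"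
    using insert by simp
  also have "\<dots> = (\<Sum>i\<in>insert a F. (\<Sum>j\<in>J. b i j powr p) powr (1/p))" using insert by simp
  finally show ?case .
qed

lemma var_sum_components:
  fixes z :: "real \<Rightarrow> real^'d"
  assumes p: "p \<ge> 1"
  shows "var_sum p z ts powr (1/p) \<le> (\<Sum>i\<in>UNIV. var_sum p (\<lambda>t. z t $ i) ts powr (1/p))"
proof -
  have "var_sum p z ts \<le> (\<Sum>j<length ts - 1. (\<Sum>i\<in>UNIV. \<bar>z (ts!Suc j) $ i - z (ts!j) $ i\<bar>) powr p)"
    unfolding var_sum_def using p
    by (intro sum_mono powr_mono2) (auto intro: order_trans[OF norm_le_l1_cart] sum_nonneg)
  then have "var_sum p z ts powr (1/p) \<le> (\<Sum>j<length ts - 1. (\<Sum>i\<in>UNIV. \<bar>z (ts!Suc j) $ i - z (ts!j) $ i\<bar>) powr p) powr (1/p)"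
    using p by (intro powr_mono2) (auto simp: var_sum_nonneg)
  also have "\<dots> \<le> (\<Sum>i\<in>UNIV. (\<Sum>j<length ts - 1. \<bar>z (ts!Suc j) $ i - z (ts!j) $ i\<bar> powr p) powr (1/p))"
    using p by (intro minkowski_sum) auto
  also have "\<dots> = (\<Sum>i\<in>UNIV. var_sum p (\<lambda>t. z t $ i) ts powr (1/p))"
    unfolding var_sum_def by simp
  finally show ?thesis .
qed

lemma sorted_wrt_less_snoc:
  fixes L :: "real list"
  assumes "sorted_wrt (<) L" "L \<noteq> []" "last L < c"
  shows "sorted_wrt (<) (L @ [c])"
proof -
  have "x \<le> last L" if "x \<in> set L" for x
  proof -
    have L: "L = butlast L @ [last L]" using assms(2) by simp
    have "sorted_wrt (<) (butlast L @ [last L])" using assms(1) L by simp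
    then have "\<forall>z\<in>set (butlast L). z < last L" unfolding sorted_wrt_append by simp
    moreover have "x \<in> set (butlast L) \<or> x = last L" using that L
      by (metis Un_iff empty_iff empty_set list.set(2) set_append insertE)
    ultimately show ?thesis by fastforce
  qed
  then have "\<forall>x\<in>set L. x < c" using assms(3) by (meson le_less_trans)
  then show ?thesis using assms(1) by (simp add: sorted_wrt_append)
qed

definition INV where
  "INV p a G \<epsilon> U W S xs L j \<longleftrightarrow> sorted_wrt (<) L \<and> set L \<subseteq> U ` S \<union> W ` S \<and> length L < length xs \<and> j \<in> set xs \<and>
      ((L = [] \<and> psum p (\<lambda>s t. \<bar>a t - a s\<bar>) xs = 0 \<and> a (last xs) = a j)
     \<or> (L \<noteq> [] \<and> last L = W j \<and> j < last xs \<and> a j < a (last xs) \<and>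
         psum p (\<lambda>s t. \<bar>a t - a s\<bar>) xs \<le> psum p (\<lambda>u v. \<bar>G v - G u\<bar> + 2 * \<epsilon>) L + (a (last xs) - a j) powr p)
     \<or> (L \<noteq> [] \<and> last L = U j \<and> j < last xs \<and> a (last xs) < a j \<and>
         psum p (\<lambda>s t. \<bar>a t - a s\<bar>) xs \<le> psum p (\<lambda>u v. \<bar>G v - G u\<bar> + 2 * \<epsilon>) L + (a j - a (last xs)) powr p))"

lemma INV_F:
  "sorted_wrt (<) L \<Longrightarrow> set L \<subseteq> U ` S \<union> W ` S \<Longrightarrow> length L < length xs \<Longrightarrow> j \<in> set xs \<Longrightarrow>
   L = [] \<Longrightarrow> psum p (\<lambda>s t. \<bar>a t - a s\<bar>) xs = 0 \<Longrightarrow> a (last xs) = a j \<Longrightarrow> INV p a G \<epsilon> U W S xs L j"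
  unfolding INV_def by blast

lemma INV_U:
  "sorted_wrt (<) L \<Longrightarrow> set L \<subseteq> U ` S \<union> W ` S \<Longrightarrow> length L < length xs \<Longrightarrow> j \<in> set xs \<Longrightarrow>
   L \<noteq> [] \<Longrightarrow> last L = W j \<Longrightarrow> j < last xs \<Longrightarrow> a j < a (last xs) \<Longrightarrow>
   psum p (\<lambda>s t. \<bar>a t - a s\<bar>) xs \<le> psum p (\<lambda>u v. \<bar>G v - G u\<bar> + 2 * \<epsilon>) L + (a (last xs) - a j) powr p
   \<Longrightarrow> INV p a G \<epsilon> U W S xs L j"
  unfolding INV_def by blast

lemma INV_D:
  "sorted_wrt (<) L \<Longrightarrow> set L \<subseteq> U ` S \<union> W ` S \<Longrightarrow> length L < length xs \<Longrightarrow> j \<in> set xs \<Longrightarrow>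
   L \<noteq> [] \<Longrightarrow> last L = U j \<Longrightarrow> j < last xs \<Longrightarrow> a (last xs) < a j \<Longrightarrow>
   psum p (\<lambda>s t. \<bar>a t - a s\<bar>) xs \<le> psum p (\<lambda>u v. \<bar>G v - G u\<bar> + 2 * \<epsilon>) L + (a j - a (last xs)) powr p
   \<Longrightarrow> INV p a G \<epsilon> U W S xs L j"
  unfolding INV_def by blast

lemma comb_inv:
  fixes a G U W :: "real \<Rightarrow> real" and \<epsilon> p :: real and S :: "real set"
  assumes p: "p \<ge> 1" and eps: "\<epsilon> \<ge> 0"
    and UW_le: "\<And>t. t \<in> S \<Longrightarrow> U t \<le> t \<and> W t \<le> t"
    and HU: "\<And>t. t \<in> S \<Longrightarrow> a t - \<epsilon> \<le> G (U t)"
    and HW: "\<And>t. t \<in> S \<Longrightarrow> G (W t) \<le> a t + \<epsilon>"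
    and H2: "\<And>s t. s \<in> S \<Longrightarrow> t \<in> S \<Longrightarrow> s < t \<Longrightarrow> a s < a t \<Longrightarrow> s < U t"
    and H3: "\<And>s t. s \<in> S \<Longrightarrow> t \<in> S \<Longrightarrow> s < t \<Longrightarrow> a t < a s \<Longrightarrow> s < W t"
  shows "xs \<noteq> [] \<Longrightarrow> sorted_wrt (<) xs \<Longrightarrow> set xs \<subseteq> S \<Longrightarrow> \<exists>L j. INV p a G \<epsilon> U W S xs L j"
proof (induction xs rule: rev_induct)
  case Nil then show ?case by simp
next
  case (snoc y xs)
  define A where "A = (\<lambda>s t. \<bar>a t - a s\<bar>)"
  define B where "B = (\<lambda>u v. \<bar>G v - G u\<bar> + 2 * \<epsilon>)"
  have lastxy: "last (xs @ [y]) = y" by simp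
  have len: "length (xs @ [y]) = Suc (length xs)" by simp
  have setxy: "set xs \<subseteq> set (xs @ [y])" "y \<in> set (xs @ [y])" by auto
  show ?case
  proof (cases "xs = []")
    case True
    have "INV p a G \<epsilon> U W S (xs @ [y]) [] y"
      by (rule INV_F) (use True in simp_all)
    then show ?thesis by blast
  next
    case xsne: False
    have sxs: "sorted_wrt (<) xs" and ylt: "\<And>x. x \<in> set xs \<Longrightarrow> x < y"
      using snoc.prems(2) by (auto simp: sorted_wrt_append)
    have setS: "set xs \<subseteq> S" "y \<in> S" using snoc.prems(3) by auto
    from snoc.IH[OF xsne sxs setS(1)] obtain L j where I: "INV p a G \<epsilon> U W S xs L j" by blast
    have L: "sorted_wrt (<) L" "set L \<subseteq> U ` S \<union> W ` S" "length L < length xs" "j \<in> set xs"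
      using I unfolding INV_def by blast+
    define n where "n = last xs"
    have nin: "n \<in> set xs" using xsne unfolding n_def by simp
    have ny: "n < y" using ylt[OF nin] .
    have jy: "j < y" using ylt[OF L(4)] .
    have jS: "j \<in> S" and nS: "n \<in> S" using L(4) nin setS by auto
    have ps: "psum p A (xs @ [y]) = psum p A xs + \<bar>a y - a n\<bar> powr p"
      using psum_snoc[OF xsne] unfolding A_def n_def by simp
    have j2: "j \<in> set (xs @ [y])" "n \<in> set (xs @ [y])" using L(4) nin by auto
    have lenL: "length L < length (xs @ [y])" using L(3) by simp
    from I consider (F) "L = []" "psum p A xs = 0" "a n = a j"
      | (Up) "L \<noteq> []" "last L = W j" "j < n" "a j < a n" "psum p A xs \<le> psum p B L + (a n - a j) powr p"
      | (Dn) "L \<noteq> []" "last L = U j" "j < n" "a n < a j" "psum p A xs \<le> psum p B L + (a j - a n) powr p"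
      unfolding INV_def n_def A_def B_def by argo
    then show ?thesis
    proof cases
      case F
      consider "a y = a n" | "a n < a y" | "a y < a n" by linarith
      then show ?thesis
      proof cases
        case 1
        have "INV p a G \<epsilon> U W S (xs @ [y]) L j"
          by (rule INV_F[OF L(1,2) lenL j2(1)]) (use F ps 1 p in \<open>simp_all add: A_def\<close>)
        then show ?thesis by blast
      next
        case 2
        have "INV p a G \<epsilon> U W S (xs @ [y]) [W j] j"
          by (rule INV_U[OF _ _ _ j2(1)]) (use F ps 2 jS jy xsne in \<open>simp_all add: A_def\<close>)
        then show ?thesis by blast
      next
        case 3
        have "INV p a G \<epsilon> U W S (xs @ [y]) [U j] j"
          by (rule INV_D[OF _ _ _ j2(1)]) (use F ps 3 jS jy xsne in \<open>simp_all add: A_def\<close>)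
        then show ?thesis by blast
      qed
    next
      case Up
      show ?thesis
      proof (cases "a n \<le> a y")
        case True
        have "psum p A (xs @ [y]) \<le> psum p B L + ((a n - a j) powr p + (a y - a n) powr p)"
          using ps Up True by simp
        also have "\<dots> \<le> psum p B L + (a y - a j) powr p"
          using superadd_powr[of "a n - a j" "a y - a n" p] Up True p by simp
        finally have "INV p a G \<epsilon> U W S (xs @ [y]) L j"
          by (intro INV_U[OF L(1,2) lenL j2(1)]) (use Up True jy in \<open>simp_all add: A_def B_def\<close>)
        then show ?thesis by blast
      next
        case False
        have Wj: "W j \<le> j" using UW_le[OF jS] by simp
        have jU: "j < U n" using H2[OF jS nS Up(3) Up(4)] .
        define L' where "L' = L @ [U n]"
        have sL': "sorted_wrt (<) L'" unfolding L'_def using sorted_wrt_less_snoc[OF L(1) Up(1)] Up(2) Wj jU by simp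
        have setL': "set L' \<subseteq> U ` S \<union> W ` S" unfolding L'_def using L(2) nS by auto
        have pB: "psum p B L' = psum p B L + (\<bar>G (U n) - G (W j)\<bar> + 2 * \<epsilon>) powr p"
          unfolding L'_def using psum_snoc[OF Up(1)] Up(2) unfolding B_def by simp
        have "a n - a j \<le> \<bar>G (U n) - G (W j)\<bar> + 2 * \<epsilon>"
          using HU[OF nS] HW[OF jS] by linarith
        then have "(a n - a j) powr p \<le> (\<bar>G (U n) - G (W j)\<bar> + 2 * \<epsilon>) powr p"
          using Up(4) p by (intro powr_mono2) auto
        then have "psum p A (xs @ [y]) \<le> psum p B L' + (a n - a y) powr p"
          using ps Up False pB by simp
        then have "INV p a G \<epsilon> U W S (xs @ [y]) L' n"
          by (intro INV_D[OF sL' setL' _ j2(2)]) (use False ny L(3) in \<open>simp_all add: L'_def A_def B_def\<close>)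
        then show ?thesis by blast
      qed
    next
      case Dn
      show ?thesis
      proof (cases "a y \<le> a n")
        case True
        have "psum p A (xs @ [y]) \<le> psum p B L + ((a j - a n) powr p + (a n - a y) powr p)"
          using ps Dn True by simp
        also have "\<dots> \<le> psum p B L + (a j - a y) powr p"
          using superadd_powr[of "a j - a n" "a n - a y" p] Dn True p by simp
        finally have "INV p a G \<epsilon> U W S (xs @ [y]) L j"
          by (intro INV_D[OF L(1,2) lenL j2(1)]) (use Dn True jy in \<open>simp_all add: A_def B_def\<close>)
        then show ?thesis by blast
      next
        case False
        have Uj: "U j \<le> j" using UW_le[OF jS] by simp
        have jW: "j < W n" using H3[OF jS nS Dn(3) Dn(4)] .
        define L' where "L' = L @ [W n]"
        have sL': "sorted_wrt (<) L'" unfolding L'_def using sorted_wrt_less_snoc[OF L(1) Dn(1)] Dn(2) Uj jW by simp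
        have setL': "set L' \<subseteq> U ` S \<union> W ` S" unfolding L'_def using L(2) nS by auto
        have pB: "psum p B L' = psum p B L + (\<bar>G (W n) - G (U j)\<bar> + 2 * \<epsilon>) powr p"
          unfolding L'_def using psum_snoc[OF Dn(1)] Dn(2) unfolding B_def by simp
        have "a j - a n \<le> \<bar>G (W n) - G (U j)\<bar> + 2 * \<epsilon>"
          using HW[OF nS] HU[OF jS] by linarith
        then have "(a j - a n) powr p \<le> (\<bar>G (W n) - G (U j)\<bar> + 2 * \<epsilon>) powr p"
          using Dn(4) p by (intro powr_mono2) auto
        then have "psum p A (xs @ [y]) \<le> psum p B L' + (a y - a n) powr p"
          using ps Dn False pB by simp
        then have "INV p a G \<epsilon> U W S (xs @ [y]) L' n"
          by (intro INV_U[OF sL' setL' _ j2(2)]) (use False ny L(3) in \<open>simp_all add: L'_def A_def B_def\<close>)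
        then show ?thesis by blast
      qed
    qed
  qed
qed

lemma comb:
  fixes a G U W :: "real \<Rightarrow> real" and \<epsilon> p :: real and ts :: "real list"
  assumes p: "p \<ge> 1" and eps: "\<epsilon> \<ge> 0" and sts: "sorted_wrt (<) ts"
    and UW_le: "\<And>t. t \<in> set ts \<Longrightarrow> U t \<le> t \<and> W t \<le> t"
    and HU: "\<And>t. t \<in> set ts \<Longrightarrow> a t - \<epsilon> \<le> G (U t)"
    and HW: "\<And>t. t \<in> set ts \<Longrightarrow> G (W t) \<le> a t + \<epsilon>"
    and H2: "\<And>s t. s \<in> set ts \<Longrightarrow> t \<in> set ts \<Longrightarrow> s < t \<Longrightarrow> a s < a t \<Longrightarrow> s < U t"
    and H3: "\<And>s t. s \<in> set ts \<Longrightarrow> t \<in> set ts \<Longrightarrow> s < t \<Longrightarrow> a t < a s \<Longrightarrow> s < W t"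
  shows "\<exists>L. sorted_wrt (<) L \<and> set L \<subseteq> U ` set ts \<union> W ` set ts \<and> length L \<le> length ts \<and>
     psum p (\<lambda>s t. \<bar>a t - a s\<bar>) ts \<le> psum p (\<lambda>u v. \<bar>G v - G u\<bar> + 2 * \<epsilon>) L"
proof (cases "ts = []")
  case True then show ?thesis by (intro exI[of _ "[]"]) simp
next
  case tsne: False
  define A where "A = (\<lambda>s t. \<bar>a t - a s\<bar>)"
  define B where "B = (\<lambda>u v. \<bar>G v - G u\<bar> + 2 * \<epsilon>)"
  define S where "S = set ts"
  obtain L j where I: "INV p a G \<epsilon> U W S ts L j"
    using comb_inv[OF p eps, of S U W a G, OF _ _ _ _ _ tsne sts] UW_le HU HW H2 H3 unfolding S_def by blast
  have L: "sorted_wrt (<) L" "set L \<subseteq> U ` S \<union> W ` S" "length L < length ts" "j \<in> set ts"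
    using I unfolding INV_def by blast+
  define m where "m = last ts"
  have mS: "m \<in> set ts" using tsne unfolding m_def by simp
  have jS: "j \<in> set ts" using L(4) .
  from I consider (F) "L = []" "psum p A ts = 0"
      | (Up) "L \<noteq> []" "last L = W j" "j < m" "a j < a m" "psum p A ts \<le> psum p B L + (a m - a j) powr p"
      | (Dn) "L \<noteq> []" "last L = U j" "j < m" "a m < a j" "psum p A ts \<le> psum p B L + (a j - a m) powr p"
      unfolding INV_def m_def A_def B_def by argo
  then show ?thesis
  proof cases
    case F then show ?thesis unfolding A_def by (intro exI[of _ "[]"]) simp
  next
    case Up
    have Wj: "W j \<le> j" using UW_le[OF jS] by simp
    have jU: "j < U m" using H2[OF jS mS Up(3) Up(4)] .
    define L' where "L' = L @ [U m]"
    have sL': "sorted_wrt (<) L'" unfolding L'_def using sorted_wrt_less_snoc[OF L(1) Up(1)] Up(2) Wj jU by simp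
    have setL': "set L' \<subseteq> U ` set ts \<union> W ` set ts" unfolding L'_def using L(2) mS unfolding S_def by auto
    have pB: "psum p B L' = psum p B L + (\<bar>G (U m) - G (W j)\<bar> + 2 * \<epsilon>) powr p"
      unfolding L'_def using psum_snoc[OF Up(1)] Up(2) unfolding B_def by simp
    have "a m - a j \<le> \<bar>G (U m) - G (W j)\<bar> + 2 * \<epsilon>"
      using HU[OF mS] HW[OF jS] by linarith
    then have "(a m - a j) powr p \<le> (\<bar>G (U m) - G (W j)\<bar> + 2 * \<epsilon>) powr p"
      using Up(4) p by (intro powr_mono2) auto
    then have "psum p A ts \<le> psum p B L'" using Up pB by simp
    then show ?thesis using sL' setL' L(3) unfolding A_def B_def L'_def
      by (intro exI[of _ "L @ [U m]"]) simp
  next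
    case Dn
    have Uj: "U j \<le> j" using UW_le[OF jS] by simp
    have jW: "j < W m" using H3[OF jS mS Dn(3) Dn(4)] .
    define L' where "L' = L @ [W m]"
    have sL': "sorted_wrt (<) L'" unfolding L'_def using sorted_wrt_less_snoc[OF L(1) Dn(1)] Dn(2) Uj jW by simp
    have setL': "set L' \<subseteq> U ` set ts \<union> W ` set ts" unfolding L'_def using L(2) mS unfolding S_def by auto
    have pB: "psum p B L' = psum p B L + (\<bar>G (W m) - G (U j)\<bar> + 2 * \<epsilon>) powr p"
      unfolding L'_def using psum_snoc[OF Dn(1)] Dn(2) unfolding B_def by simp
    have "a j - a m \<le> \<bar>G (W m) - G (U j)\<bar> + 2 * \<epsilon>"
      using HW[OF mS] HU[OF jS] by linarith
    then have "(a j - a m) powr p \<le> (\<bar>G (W m) - G (U j)\<bar> + 2 * \<epsilon>) powr p"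
      using Dn(4) p by (intro powr_mono2) auto
    then have "psum p A ts \<le> psum p B L'" using Dn pB by simp
    then show ?thesis using sL' setL' L(3) unfolding A_def B_def L'_def
      by (intro exI[of _ "L @ [W m]"]) simp
  qed
qed

lemma sorted_hd_le:
  fixes L :: "real list"
  assumes "sorted_wrt (<) L" "x \<in> set L" shows "hd L \<le> x"
  using assms by (cases L) auto

lemma sorted_le_last:
  fixes L :: "real list"
  assumes "sorted_wrt (<) L" "x \<in> set L" shows "x \<le> last L"
proof -
  have ne: "L \<noteq> []" using assms by auto
  have L: "L = butlast L @ [last L]" using ne by simp
  have "sorted_wrt (<) (butlast L @ [last L])" using assms(1) L by simp
  then have "\<forall>z\<in>set (butlast L). z < last L" unfolding sorted_wrt_append by simp
  moreover have "x \<in> set (butlast L) \<or> x = last L" using assms(2) L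
    by (metis Un_iff empty_iff empty_set list.set(2) set_append insertE)
  ultimately show ?thesis by fastforce
qed

lemma psum_cong:
  assumes "\<And>s t. s \<in> set L \<Longrightarrow> t \<in> set L \<Longrightarrow> \<phi> s t = \<psi> s t"
  shows "psum p \<phi> L = psum p \<psi> L"
  unfolding psum_def using assms by (intro sum.cong refl) (auto simp: nth_mem)

lemma chain_bound_A:
  fixes g :: "real \<Rightarrow> real"
  assumes p: "p \<ge> 1" and C: "C \<ge> 0"
    and HC: "\<And>us. subdivision 0 T us \<Longrightarrow> var_sum p g us \<le> C powr p"
    and sL: "sorted_wrt (<) L" and setL: "set L \<subseteq> {0..T}"
  shows "psum p (\<lambda>u v. \<bar>g v - g u\<bar>) L \<le> C powr p"
proof (cases "L = []")
  case True then show ?thesis by simp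
next
  case ne: False
  define \<phi> where "\<phi> = (\<lambda>u v. \<bar>g v - g u\<bar>)"
  define L1 where "L1 = (if hd L = 0 then L else 0 # L)"
  have hdL: "hd L \<in> set L" using ne by simp
  have hd0: "0 \<le> hd L" using setL hdL by auto
  have L1ne: "L1 \<noteq> []" unfolding L1_def using ne by auto
  have hdL1: "hd L1 = 0" unfolding L1_def by auto
  have hdT: "hd L \<le> T" using setL hdL by auto
  have setL1: "set L1 \<subseteq> {0..T}" unfolding L1_def using setL ne hd0 hdT by auto
  have sL1: "sorted_wrt (<) L1"
  proof (cases "hd L = 0")
    case True then show ?thesis unfolding L1_def using sL by simp
  next
    case False
    then have "\<forall>x\<in>set L. 0 < x" using sorted_hd_le[OF sL] hd0 by force
    then show ?thesis unfolding L1_def using False sL by simp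
  qed
  have p1: "psum p \<phi> L \<le> psum p \<phi> L1"
  proof (cases "hd L = 0")
    case True then show ?thesis unfolding L1_def by simp
  next
    case False
    obtain b r where L: "L = b # r" using ne by (cases L) auto
    show ?thesis unfolding L1_def using False L by (simp add: psum_Cons2)
  qed
  define L2 where "L2 = (if last L1 = T then L1 else L1 @ [T])"
  have lastL1: "last L1 \<le> T" using setL1 last_in_set[OF L1ne] by auto
  have sL2: "sorted_wrt (<) L2"
    unfolding L2_def using sorted_wrt_less_snoc[OF sL1 L1ne] lastL1 sL1 by auto
  have hdL2: "hd L2 = 0" unfolding L2_def using hdL1 L1ne by (simp add: hd_append)
  have lastL2: "last L2 = T" unfolding L2_def by simp
  have L2ne: "L2 \<noteq> []" unfolding L2_def using L1ne by simp
  have p2: "psum p \<phi> L1 \<le> psum p \<phi> L2"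
    unfolding L2_def using psum_snoc[OF L1ne, of p \<phi> T] by simp
  have "subdivision 0 T L2" unfolding subdivision_def using sL2 hdL2 lastL2 L2ne by simp
  then have "var_sum p g L2 \<le> C powr p" by (rule HC)
  moreover have "var_sum p g L2 = psum p \<phi> L2" unfolding var_sum_psum \<phi>_def by simp
  ultimately show ?thesis using p1 p2 unfolding \<phi>_def by linarith
qed

lemma mink2:
  fixes a b R p :: real
  assumes p: "p \<ge> 1" and "a \<ge> 0" "b \<ge> 0" "R \<ge> 0"
  shows "((a + b) powr p + R) powr (1/p) \<le> a + (b powr p + R) powr (1/p)"
proof -
  define x :: "nat \<Rightarrow> real" where "x = (\<lambda>i. if i = 0 then a else 0)"
  define y :: "nat \<Rightarrow> real" where "y = (\<lambda>i. if i = 0 then b else R powr (1/p))"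
  have RR: "(R powr (1/p)) powr p = R" using assms by (simp add: powr_powr)
  have "(\<Sum>i\<in>{0,1}. (x i + y i) powr p) powr (1/p) \<le> (\<Sum>i\<in>{0,1}. x i powr p) powr (1/p) + (\<Sum>i\<in>{0,1}. y i powr p) powr (1/p)"
    using assms by (intro minkowski) (auto simp: x_def y_def)
  moreover have "(\<Sum>i\<in>{0::nat,1}. (x i + y i) powr p) = (a + b) powr p + R"
    using RR by (simp add: x_def y_def)
  moreover have "(\<Sum>i\<in>{0::nat,1}. x i powr p) powr (1/p) = a"
    using assms by (simp add: x_def powr_powr)
  moreover have "(\<Sum>i\<in>{0::nat,1}. y i powr p) = b powr p + R"
    using RR by (simp add: y_def)
  ultimately show ?thesis by simp
qed

lemma chain_bound:
  fixes g :: "real \<Rightarrow> real"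
  assumes p: "p \<ge> 1" and C: "C \<ge> 0"
    and HC: "\<And>us. subdivision 0 T us \<Longrightarrow> var_sum p g us \<le> C powr p"
    and sL: "sorted_wrt (<) L" and setL: "set L \<subseteq> insert (-1) {0..T}"
  shows "psum p (\<lambda>u v. \<bar>(if v < 0 then 0 else g v) - (if u < 0 then 0 else g u)\<bar>) L \<le> (\<bar>g 0\<bar> + C) powr p"
proof -
  define G where "G = (\<lambda>s. if s < 0 then 0 else g s)"
  have CC: "C powr p \<le> (\<bar>g 0\<bar> + C) powr p" using C p by (intro powr_mono2) auto
  show ?thesis
  proof (cases L)
    case Nil then show ?thesis by simp
  next
    case (Cons c0 r)
    show ?thesis
    proof (cases "c0 < 0")
      case False
      have pos: "\<forall>x\<in>set L. 0 \<le> x" using sorted_hd_le[OF sL] False Cons by force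
      then have setL': "set L \<subseteq> {0..T}" using setL by force
      have "psum p (\<lambda>u v. \<bar>G v - G u\<bar>) L = psum p (\<lambda>u v. \<bar>g v - g u\<bar>) L"
        using pos unfolding G_def by (intro psum_cong) auto
      also have "\<dots> \<le> C powr p" by (rule chain_bound_A[OF p C HC sL setL'])
      finally show ?thesis using CC unfolding G_def by simp
    next
      case True
      have c0: "c0 = -1" using setL Cons True by auto
      show ?thesis
      proof (cases r)
        case Nil then show ?thesis using Cons by simp
      next
        case (Cons c r')
        have Lcr: "L = c0 # c # r'" using Cons \<open>L = c0 # r\<close> by simp
        have sr: "sorted_wrt (<) (c # r')" using sL Lcr by simp
        have gt: "\<forall>x\<in>set (c # r'). -1 < x" using sL Lcr c0 by simp
        have setr: "set (c # r') \<subseteq> {0..T}" using setL Lcr gt by force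
        have c_ge: "0 \<le> c" using setr by simp
        define R where "R = psum p (\<lambda>u v. \<bar>g v - g u\<bar>) (c # r')"
        have R0: "R \<ge> 0" unfolding R_def by (rule psum_nonneg)
        have "psum p (\<lambda>u v. \<bar>G v - G u\<bar>) L = \<bar>G c - G c0\<bar> powr p + psum p (\<lambda>u v. \<bar>G v - G u\<bar>) (c # r')"
          using Lcr by (simp add: psum_Cons2)
        also have "psum p (\<lambda>u v. \<bar>G v - G u\<bar>) (c # r') = R"
          unfolding R_def G_def using setr by (intro psum_cong) auto
        also have "\<bar>G c - G c0\<bar> = \<bar>g c\<bar>" unfolding G_def using c0 c_ge by simp
        finally have eq: "psum p (\<lambda>u v. \<bar>G v - G u\<bar>) L = \<bar>g c\<bar> powr p + R" .
        define b where "b = \<bar>g c - g 0\<bar>"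
        have bR: "b powr p + R \<le> C powr p"
        proof (cases "c = 0")
          case True
          have "R \<le> C powr p" unfolding R_def by (rule chain_bound_A[OF p C HC sr setr])
          then show ?thesis using True p unfolding b_def by simp
        next
          case False
          have s0: "sorted_wrt (<) (0 # c # r')" using sr gt c_ge False sorted_hd_le[OF sr] by force
          have set0: "set (0 # c # r') \<subseteq> {0..T}" using setr by simp
          have "psum p (\<lambda>u v. \<bar>g v - g u\<bar>) (0 # c # r') \<le> C powr p"
            by (rule chain_bound_A[OF p C HC s0 set0])
          then show ?thesis unfolding b_def R_def by (simp add: psum_Cons2)
        qed
        have "\<bar>g c\<bar> powr p \<le> (\<bar>g 0\<bar> + b) powr p" unfolding b_def using p by (intro powr_mono2) auto
        then have "\<bar>g c\<bar> powr p + R \<le> (\<bar>g 0\<bar> + b) powr p + R" by simp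
        then have "(\<bar>g c\<bar> powr p + R) powr (1/p) \<le> ((\<bar>g 0\<bar> + b) powr p + R) powr (1/p)"
          using p R0 by (intro powr_mono2) auto
        also have "\<dots> \<le> \<bar>g 0\<bar> + (b powr p + R) powr (1/p)" using mink2[OF p, of "\<bar>g 0\<bar>" b R] R0 b_def by simp
        also have "\<dots> \<le> \<bar>g 0\<bar> + (C powr p) powr (1/p)" using bR p R0 by (simp add: powr_mono2)
        also have "\<dots> = \<bar>g 0\<bar> + C" using C p by (simp add: powr_powr)
        finally have "(\<bar>g c\<bar> powr p + R) powr (1/p) \<le> \<bar>g 0\<bar> + C" .
        then have "((\<bar>g c\<bar> powr p + R) powr (1/p)) powr p \<le> (\<bar>g 0\<bar> + C) powr p"
          using p by (intro powr_mono2) auto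
        moreover have "((\<bar>g c\<bar> powr p + R) powr (1/p)) powr p = \<bar>g c\<bar> powr p + R"
          using p R0 by (simp add: powr_powr)
        ultimately show ?thesis using eq unfolding G_def by simp
      qed
    qed
  qed
qed

lemma eps_le:
  fixes x y c \<delta> :: real
  assumes "\<delta> > 0" "c \<ge> 0" "\<And>\<epsilon>. 0 < \<epsilon> \<Longrightarrow> \<epsilon> < \<delta> \<Longrightarrow> x \<le> y + c * \<epsilon>"
  shows "x \<le> y"
proof (rule ccontr)
  assume "\<not> x \<le> y"
  then have xy: "x - y > 0" by simp
  define \<epsilon> where "\<epsilon> = min (\<delta>/2) ((x - y) / (2 * (c + 1)))"
  have e: "0 < \<epsilon>" "\<epsilon> < \<delta>" using assms xy unfolding \<epsilon>_def by auto
  have "c * \<epsilon> \<le> c * ((x - y) / (2 * (c + 1)))" using assms e unfolding \<epsilon>_def by (intro mult_left_mono) auto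
  also have "\<dots> < x - y"
  proof -
    have "c * ((x - y) / (2 * (c + 1))) = (x - y) * (c / (2 * (c + 1)))" by simp
    also have "\<dots> < (x - y) * 1" using xy assms(2) by (intro mult_strict_left_mono) (auto simp: field_simps)
    finally show ?thesis by simp
  qed
  finally show False using assms(3)[OF e] by simp
qed

lemma subdivision_set:
  assumes "subdivision a b ts" shows "set ts \<subseteq> {a..b}" "sorted_wrt (<) ts"
  using assms sorted_hd_le[of ts] sorted_le_last[of ts] unfolding subdivision_def by auto

lemma psum_const:
  "psum p (\<lambda>u v. c) L = real (length L - 1) * c powr p"
  unfolding psum_def by simp

lemma onedim:
  fixes k k' h h' :: "real \<Rightarrow> real" and p T C :: real and ts :: "real list"
  assumes p: "p \<ge> 1" and C: "C \<ge> 0"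
    and mk: "\<And>s t. 0 \<le> s \<Longrightarrow> s \<le> t \<Longrightarrow> k s \<le> k t"
    and mk': "\<And>s t. 0 \<le> s \<Longrightarrow> s \<le> t \<Longrightarrow> k' s \<le> k' t"
    and k0: "k 0 = 0" and k'0: "k' 0 = 0"
    and hk: "\<And>t. 0 \<le> t \<Longrightarrow> h t \<le> k t" and hk': "\<And>t. 0 \<le> t \<Longrightarrow> h' t \<le> k' t"
    and Wk: "\<And>t \<epsilon>. 0 \<le> t \<Longrightarrow> 0 < \<epsilon> \<Longrightarrow> k t < \<epsilon> \<or> (\<exists>u\<in>{0..t}. k t - \<epsilon> < h u)"
    and Wk': "\<And>t \<epsilon>. 0 \<le> t \<Longrightarrow> 0 < \<epsilon> \<Longrightarrow> k' t < \<epsilon> \<or> (\<exists>u\<in>{0..t}. k' t - \<epsilon> < h' u)"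
    and HC: "\<And>us. subdivision 0 T us \<Longrightarrow> var_sum p (\<lambda>t. h t - h' t) us \<le> C powr p"
    and ts: "subdivision 0 T ts"
  shows "var_sum p (\<lambda>t. k t - k' t) ts powr (1/p) \<le> \<bar>h 0 - h' 0\<bar> + C"
proof -
  define a where "a = (\<lambda>t. k t - k' t)"
  define g where "g = (\<lambda>t. h t - h' t)"
  define G where "G = (\<lambda>s. if s < 0 then 0 else g s)"
  define S where "S = set ts"
  have setts: "S \<subseteq> {0..T}" and sts: "sorted_wrt (<) ts" using subdivision_set[OF ts] unfolding S_def by auto
  have kpos: "0 \<le> k t" "0 \<le> k' t" if "0 \<le> t" for t using mk[of 0 t] mk'[of 0 t] that k0 k'0 by auto
  define D where "D = (\<lambda>(s, t). \<bar>a t - a s\<bar>) ` {(s, t). s \<in> S \<and> t \<in> S \<and> a s \<noteq> a t}"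
  have finD: "finite D"
  proof -
    have "{(s, t). s \<in> S \<and> t \<in> S \<and> a s \<noteq> a t} \<subseteq> S \<times> S" by auto
    then show ?thesis unfolding D_def S_def by (intro finite_imageI) (auto intro: finite_subset)
  qed
  define \<delta> where "\<delta> = Min (insert 1 D)"
  have \<delta>pos: "\<delta> > 0" unfolding \<delta>_def using finD by (auto simp: D_def)
  have \<delta>le: "\<delta> \<le> \<bar>a t - a s\<bar>" if "s \<in> S" "t \<in> S" "a s \<noteq> a t" for s t
    unfolding \<delta>_def using finD that by (intro Min_le) (auto simp: D_def)
  define N where "N = real (length ts)"
  have N0: "N \<ge> 0" unfolding N_def by simp
  have main: "var_sum p a ts powr (1/p) \<le> \<bar>g 0\<bar> + C + (2 * N powr (1/p)) * \<epsilon>" if e: "0 < \<epsilon>" "\<epsilon> < \<delta>" for \<epsilon>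
  proof -
    define U where "U = (\<lambda>t. if k t < \<epsilon> then -1 else SOME u. u \<in> {0..t} \<and> k t - \<epsilon> < h u)"
    define W where "W = (\<lambda>t. if k' t < \<epsilon> then -1 else SOME u. u \<in> {0..t} \<and> k' t - \<epsilon> < h' u)"
    have Ucase: "(k t < \<epsilon> \<and> U t = -1) \<or> (\<not> k t < \<epsilon> \<and> U t \<in> {0..t} \<and> k t - \<epsilon> < h (U t))" if "0 \<le> t" for t
    proof (cases "k t < \<epsilon>")
      case True then show ?thesis unfolding U_def by simp
    next
      case False
      then have "\<exists>u. u \<in> {0..t} \<and> k t - \<epsilon> < h u" using Wk[OF that e(1)] by auto
      then have "(SOME u. u \<in> {0..t} \<and> k t - \<epsilon> < h u) \<in> {0..t} \<and> k t - \<epsilon> < h (SOME u. u \<in> {0..t} \<and> k t - \<epsilon> < h u)"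
        by (rule someI_ex)
      then show ?thesis unfolding U_def using False by simp
    qed
    have Wcase: "(k' t < \<epsilon> \<and> W t = -1) \<or> (\<not> k' t < \<epsilon> \<and> W t \<in> {0..t} \<and> k' t - \<epsilon> < h' (W t))" if "0 \<le> t" for t
    proof (cases "k' t < \<epsilon>")
      case True then show ?thesis unfolding W_def by simp
    next
      case False
      then have "\<exists>u. u \<in> {0..t} \<and> k' t - \<epsilon> < h' u" using Wk'[OF that e(1)] by auto
      then have "(SOME u. u \<in> {0..t} \<and> k' t - \<epsilon> < h' u) \<in> {0..t} \<and> k' t - \<epsilon> < h' (SOME u. u \<in> {0..t} \<and> k' t - \<epsilon> < h' u)"
        by (rule someI_ex)
      then show ?thesis unfolding W_def using False by simp
    qed
    have t0: "0 \<le> t" "t \<le> T" if "t \<in> S" for t using that setts by auto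
    have UW_le: "U t \<le> t \<and> W t \<le> t" if "t \<in> set ts" for t
      using Ucase[OF t0(1)] Wcase[OF t0(1)] that t0[of t] unfolding S_def by fastforce
    have HU: "a t - \<epsilon> \<le> G (U t)" if "t \<in> set ts" for t
    proof -
      have t: "0 \<le> t" using t0 that unfolding S_def by auto
      from Ucase[OF t] show ?thesis
      proof
        assume "k t < \<epsilon> \<and> U t = -1"
        then show ?thesis using kpos[OF t] unfolding a_def G_def by simp
      next
        assume u: "\<not> k t < \<epsilon> \<and> U t \<in> {0..t} \<and> k t - \<epsilon> < h (U t)"
        have "h' (U t) \<le> k' (U t)" using hk' u by auto
        also have "\<dots> \<le> k' t" using mk' u by auto
        finally show ?thesis using u unfolding a_def G_def g_def by auto
      qed
    qed
    have HW: "G (W t) \<le> a t + \<epsilon>" if "t \<in> set ts" for t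
    proof -
      have t: "0 \<le> t" using t0 that unfolding S_def by auto
      from Wcase[OF t] show ?thesis
      proof
        assume "k' t < \<epsilon> \<and> W t = -1"
        then show ?thesis using kpos[OF t] unfolding a_def G_def by simp
      next
        assume u: "\<not> k' t < \<epsilon> \<and> W t \<in> {0..t} \<and> k' t - \<epsilon> < h' (W t)"
        have "h (W t) \<le> k (W t)" using hk u by auto
        also have "\<dots> \<le> k t" using mk u by auto
        finally show ?thesis using u unfolding a_def G_def g_def by auto
      qed
    qed
    have H2: "s < U t" if st: "s \<in> set ts" "t \<in> set ts" "s < t" "a s < a t" for s t
    proof -
      have s: "0 \<le> s" and t: "0 \<le> t" using t0 st unfolding S_def by auto
      have "\<delta> \<le> a t - a s" using \<delta>le[of s t] st unfolding S_def by auto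
      then have d: "\<epsilon> < a t - a s" using e by simp
      have "k' s \<le> k' t" using mk' s st by simp
      then have kk: "\<epsilon> < k t - k s" using d unfolding a_def by simp
      then have nk: "\<not> k t < \<epsilon>" using kpos[OF s] by simp
      then have u: "U t \<in> {0..t}" "k t - \<epsilon> < h (U t)" using Ucase[OF t] by auto
      show ?thesis
      proof (rule ccontr)
        assume "\<not> s < U t"
        then have "h (U t) \<le> k s" using hk[of "U t"] mk[of "U t" s] u by auto
        then show False using u kk by simp
      qed
    qed
    have H3: "s < W t" if st: "s \<in> set ts" "t \<in> set ts" "s < t" "a t < a s" for s t
    proof -
      have s: "0 \<le> s" and t: "0 \<le> t" using t0 st unfolding S_def by auto
      have "\<delta> \<le> a s - a t" using \<delta>le[of s t] st unfolding S_def by auto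
      then have d: "\<epsilon> < a s - a t" using e by simp
      have "k s \<le> k t" using mk s st by simp
      then have kk: "\<epsilon> < k' t - k' s" using d unfolding a_def by simp
      then have nk: "\<not> k' t < \<epsilon>" using kpos[OF s] by simp
      then have u: "W t \<in> {0..t}" "k' t - \<epsilon> < h' (W t)" using Wcase[OF t] by auto
      show ?thesis
      proof (rule ccontr)
        assume "\<not> s < W t"
        then have "h' (W t) \<le> k' s" using hk'[of "W t"] mk'[of "W t" s] u by auto
        then show False using u kk by simp
      qed
    qed
    obtain L where L: "sorted_wrt (<) L" "set L \<subseteq> U ` set ts \<union> W ` set ts" "length L \<le> length ts"
      "psum p (\<lambda>s t. \<bar>a t - a s\<bar>) ts \<le> psum p (\<lambda>u v. \<bar>G v - G u\<bar> + 2 * \<epsilon>) L"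
      using comb[OF p _ sts UW_le HU HW H2 H3] e by auto
    have setL: "set L \<subseteq> insert (-1) {0..T}"
    proof
      fix x assume "x \<in> set L"
      then obtain t where t: "t \<in> set ts" "x = U t \<or> x = W t" using L(2) by auto
      have "0 \<le> t" "t \<le> T" using t0 t unfolding S_def by auto
      then show "x \<in> insert (-1) {0..T}" using Ucase[of t] Wcase[of t] t(2) by auto
    qed
    have cb: "psum p (\<lambda>u v. \<bar>G v - G u\<bar>) L \<le> (\<bar>g 0\<bar> + C) powr p"
      unfolding G_def using chain_bound[OF p C _ L(1) setL, of g] HC unfolding g_def by blast
    have vs: "var_sum p a ts = psum p (\<lambda>s t. \<bar>a t - a s\<bar>) ts" unfolding var_sum_psum by simp
    have "var_sum p a ts powr (1/p) \<le> psum p (\<lambda>u v. \<bar>G v - G u\<bar> + 2 * \<epsilon>) L powr (1/p)"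
      unfolding vs using L(4) p by (intro powr_mono2) (auto simp: psum_nonneg)
    also have "\<dots> \<le> psum p (\<lambda>u v. \<bar>G v - G u\<bar>) L powr (1/p) + psum p (\<lambda>u v. 2 * \<epsilon>) L powr (1/p)"
      using p e by (intro psum_minkowski) auto
    also have "psum p (\<lambda>u v. \<bar>G v - G u\<bar>) L powr (1/p) \<le> ((\<bar>g 0\<bar> + C) powr p) powr (1/p)"
      using cb p by (intro powr_mono2) (auto simp: psum_nonneg)
    also have "((\<bar>g 0\<bar> + C) powr p) powr (1/p) = \<bar>g 0\<bar> + C" using p C by (simp add: powr_powr)
    also have "psum p (\<lambda>u v. 2 * \<epsilon>) L powr (1/p) \<le> (N * (2 * \<epsilon>) powr p) powr (1/p)"
    proof -
      have "psum p (\<lambda>u v. 2 * \<epsilon>) L \<le> N * (2 * \<epsilon>) powr p"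
        unfolding psum_const N_def using L(3) by (intro mult_right_mono) auto
      then show ?thesis using p by (intro powr_mono2) (auto simp: psum_nonneg)
    qed
    also have "(N * (2 * \<epsilon>) powr p) powr (1/p) = (2 * N powr (1/p)) * \<epsilon>"
      using p e N0 by (simp add: powr_mult powr_powr)
    finally show ?thesis by simp
  qed
  have "var_sum p a ts powr (1/p) \<le> \<bar>g 0\<bar> + C"
    by (rule eps_le[OF \<delta>pos, of "2 * N powr (1/p)"]) (use main in auto)
  then show ?thesis unfolding a_def g_def .
qed

lemma cadlag_bounded:
  fixes f :: "real \<Rightarrow> 'a::real_normed_vector"
  assumes cad: "cadlag f"
  shows "\<exists>B. \<forall>s\<in>{0..t}. norm (f s) \<le> B"
proof -
  have loc: "\<exists>d b. d > 0 \<and> (\<forall>r\<in>{0..t}. dist r c < d \<longrightarrow> norm (f r) \<le> b)" if c: "c \<in> {0..t}" for c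
  proof -
    have "(f \<longlongrightarrow> f c) (at_right c)" using cad c unfolding cadlag_def by auto
    then have "eventually (\<lambda>r. dist (f r) (f c) < 1) (at_right c)" by (rule tendstoD) simp
    then obtain b1 where b1: "b1 > c" "\<And>r. r > c \<Longrightarrow> r < b1 \<Longrightarrow> dist (f r) (f c) < 1"
      unfolding eventually_at_right_field by blast
    show ?thesis
    proof (cases "c = 0")
      case True
      show ?thesis
      proof (intro exI conjI ballI impI)
        show "b1 - c > 0" using b1 by simp
        fix r assume r: "r \<in> {0..t}" "dist r c < b1 - c"
        show "norm (f r) \<le> norm (f c) + 1"
        proof (cases "r = c")
          case True then show ?thesis by simp
        next
          case False
          then have "r > c" using r True by auto
          moreover have "r < b1" using r by (auto simp: dist_real_def)
          ultimately have "dist (f r) (f c) < 1" using b1 by blast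
          then show ?thesis by (metis dist_norm norm_triangle_sub add.commute add_le_cancel_left less_imp_le order_trans)
        qed
      qed
    next
      case False
      then have "c > 0" using c by simp
      then obtain L where L: "(f \<longlongrightarrow> L) (at_left c)" using cad unfolding cadlag_def by blast
      then have "eventually (\<lambda>r. dist (f r) L < 1) (at_left c)" by (rule tendstoD) simp
      then obtain b2 where b2: "b2 < c" "\<And>r. r > b2 \<Longrightarrow> r < c \<Longrightarrow> dist (f r) L < 1"
        unfolding eventually_at_left_field by blast
      show ?thesis
      proof (intro exI conjI ballI impI)
        show "min (b1 - c) (c - b2) > 0" using b1 b2 by simp
        fix r assume r: "r \<in> {0..t}" "dist r c < min (b1 - c) (c - b2)"
        show "norm (f r) \<le> max (norm (f c) + 1) (norm L + 1)"
        proof (cases "r = c")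
          case True then show ?thesis by simp
        next
          case False
          show ?thesis
          proof (cases "r > c")
            case True
            moreover have "r < b1" using r by (auto simp: dist_real_def)
            ultimately have "dist (f r) (f c) < 1" using b1 by blast
            then have "norm (f r) \<le> norm (f c) + 1"
              by (metis dist_norm norm_triangle_sub add.commute add_le_cancel_left less_imp_le order_trans)
            then show ?thesis by simp
          next
            case nt: False
            then have "r < c" using False by simp
            moreover have "r > b2" using r by (auto simp: dist_real_def)
            ultimately have "dist (f r) L < 1" using b2 by blast
            then have "norm (f r) \<le> norm L + 1"
              by (metis dist_norm norm_triangle_sub add.commute add_le_cancel_left less_imp_le order_trans)
            then show ?thesis by simp
          qed
        qed
      qed
    qed
  qed
  then obtain d b where db: "\<And>c. c \<in> {0..t} \<Longrightarrow> d c > 0 \<and> (\<forall>r\<in>{0..t}. dist r c < d c \<longrightarrow> norm (f r) \<le> b c)"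
    by metis
  have "compact {0..t::real}" by simp
  moreover have "\<And>c. c \<in> {0..t} \<Longrightarrow> open (ball c (d c))" by simp
  moreover have "{0..t} \<subseteq> (\<Union>c\<in>{0..t}. ball c (d c))" using db by force
  ultimately obtain C' where C': "C' \<subseteq> {0..t}" "finite C'" "{0..t} \<subseteq> (\<Union>c\<in>C'. ball c (d c))"
    by (rule compactE_image)
  show ?thesis
  proof (intro exI ballI)
    fix s assume s: "s \<in> {0..t}"
    then obtain c where c: "c \<in> C'" "s \<in> ball c (d c)" using C' by blast
    have "norm (f s) \<le> b c" using db[of c] c C' s by (auto simp: dist_commute)
    also have "\<dots> \<le> \<bar>b c\<bar>" by simp
    also have "\<dots> \<le> (\<Sum>c\<in>C'. \<bar>b c\<bar>)" using C' c by (intro member_le_sum) auto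
    finally show "norm (f s) \<le> (\<Sum>c\<in>C'. \<bar>b c\<bar>)" .
  qed
qed

lemma rc_measurable:
  fixes \<phi> :: "real \<Rightarrow> real"
  assumes rc: "\<And>s. 0 \<le> s \<Longrightarrow> (\<phi> \<longlongrightarrow> \<phi> s) (at_right s)"
  shows "(\<lambda>s. indicator {0..t} s * \<phi> s) \<in> borel_measurable borel"
proof (rule borel_measurable_LIMSEQ_metric)
  define u where "u = (\<lambda>n s. min t (real_of_int \<lceil>real (Suc n) * s\<rceil> / real (Suc n)))"
  show "(\<lambda>s. indicator {0..t} s * \<phi> (u n s)) \<in> borel_measurable borel" for n
  proof -
    have 1: "(\<lambda>s. \<lceil>real (Suc n) * s\<rceil>) \<in> measurable borel (count_space UNIV)"
      by (rule measurable_compose[OF _ measurable_real_ceiling]) simp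
    have 2: "(\<lambda>s. indicator {0..t} s * \<phi> (min t (real_of_int i / real (Suc n)))) \<in> borel_measurable borel" for i :: int
      by simp
    show ?thesis unfolding u_def
      using measurable_compose_countable'[OF 2 1] by simp
  qed
  fix s :: real assume "s \<in> space borel"
  show "(\<lambda>n. indicator {0..t} s * \<phi> (u n s)) \<longlonglongrightarrow> indicator {0..t} s * \<phi> s"
  proof (cases "s \<in> {0..t}")
    case False then show ?thesis by simp
  next
    case True
    have lo: "s \<le> u n s" for n
    proof -
      have "real (Suc n) * s \<le> real_of_int \<lceil>real (Suc n) * s\<rceil>" by simp
      then have "s \<le> real_of_int \<lceil>real (Suc n) * s\<rceil> / real (Suc n)" by (simp add: field_simps)
      then show ?thesis unfolding u_def using True by simp
    qed
    have hi: "u n s \<le> s + inverse (real (Suc n))" for n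
    proof -
      have "real_of_int \<lceil>real (Suc n) * s\<rceil> \<le> real (Suc n) * s + 1" by simp
      then have "real_of_int \<lceil>real (Suc n) * s\<rceil> / real (Suc n) \<le> (real (Suc n) * s + 1) / real (Suc n)"
        by (intro divide_right_mono) auto
      also have "(real (Suc n) * s + 1) / real (Suc n) = s + inverse (real (Suc n))"
        by (simp only: add_divide_distrib) (simp add: inverse_eq_divide)
      finally have "real_of_int \<lceil>real (Suc n) * s\<rceil> / real (Suc n) \<le> s + inverse (real (Suc n))" .
      then show ?thesis unfolding u_def by simp
    qed
    have ulim: "(\<lambda>n. u n s) \<longlonglongrightarrow> s"
    proof (rule tendsto_sandwich[of "\<lambda>n. s" _ _ "\<lambda>n. s + inverse (real (Suc n))"])
      show "(\<lambda>n. s + inverse (real (Suc n))) \<longlonglongrightarrow> s"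
        using tendsto_add[OF tendsto_const LIMSEQ_inverse_real_of_nat, of s] by simp
    qed (use lo hi in auto)
    have "(\<lambda>n. \<phi> (u n s)) \<longlonglongrightarrow> \<phi> s"
    proof (rule tendstoI)
      fix e :: real assume e: "e > 0"
      have "eventually (\<lambda>r. dist (\<phi> r) (\<phi> s) < e) (at_right s)" using rc[of s] True e by (auto intro: tendstoD)
      then obtain b where b: "b > s" "\<And>r. r > s \<Longrightarrow> r < b \<Longrightarrow> dist (\<phi> r) (\<phi> s) < e"
        unfolding eventually_at_right_field by blast
      have "eventually (\<lambda>n. u n s < b) sequentially" using order_tendstoD(2)[OF ulim b(1)] .
      then show "eventually (\<lambda>n. dist (\<phi> (u n s)) (\<phi> s) < e) sequentially"
      proof (rule eventually_mono)
        fix n assume "u n s < b"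
        then show "dist (\<phi> (u n s)) (\<phi> s) < e" using b lo[of n] e
          by (cases "u n s = s") auto
      qed
    qed
    then show ?thesis using True by simp
  qed
qed

lemma sp_witness:
  fixes l y x k :: "real \<Rightarrow> real^'d" and t \<epsilon> :: real
  assumes sp: "SP l y x k" and cl: "cadlag l" and t: "0 \<le> t" and e: "0 < \<epsilon>"
  shows "k t $ i < \<epsilon> \<or> (\<exists>u\<in>{0..t}. k t $ i - \<epsilon> < l u $ i - y u $ i)"
proof (rule ccontr)
  assume "\<not> ?thesis"
  then have Kt: "\<epsilon> \<le> k t $ i" and hb: "\<And>u. u \<in> {0..t} \<Longrightarrow> l u $ i - y u $ i \<le> k t $ i - \<epsilon>"
    by (auto simp: not_less)
  define K where "K = (\<lambda>s. k s $ i)"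
  define F where "F = (\<lambda>s. K (max 0 s))"
  define \<mu> where "\<mu> = interval_measure F"
  define f where "f = (\<lambda>s. x s $ i - l s $ i)"
  have cx: "cadlag x" and ck: "cadlag k" using sp unfolding SP_def by auto
  have xyk: "\<And>s. 0 \<le> s \<Longrightarrow> x s = y s + k s" and lx: "\<And>s. 0 \<le> s \<Longrightarrow> l s $ i \<le> x s $ i"
    using sp unfolding SP_def by auto
  have k0: "k 0 = 0" using sp unfolding SP_def by auto
  have mono: "mono_on {0..} K" using sp unfolding SP_def K_def by auto
  have int0: "(LINT s:{0..t}|\<mu>. f s) = 0" using sp t unfolding SP_def \<mu>_def F_def K_def f_def by auto
  have Kmono: "K s \<le> K r" if "0 \<le> s" "s \<le> r" for s r
    using mono_onD[OF mono, of s r] that by auto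
  have K0: "K 0 = 0" using k0 unfolding K_def by simp
  have Fmono: "F s \<le> F r" if "s \<le> r" for s r
    unfolding F_def using that by (intro Kmono) auto
  have Krc: "(K \<longlongrightarrow> K s) (at_right s)" if "0 \<le> s" for s
    unfolding K_def using ck that unfolding cadlag_def by (auto intro: tendsto_vec_nth)
  have Frc: "continuous (at_right a) F" for a
  proof (cases "0 \<le> a")
    case True
    have ev: "eventually (\<lambda>r. K r = F r) (at_right a)"
      unfolding eventually_at_right_field F_def using True by (intro exI[of _ "a + 1"]) auto
    have "(F \<longlongrightarrow> F a) (at_right a)"
      using tendsto_cong[OF ev] Krc[OF True] True unfolding F_def by simp
    then show ?thesis unfolding continuous_within by simp
  next
    case False
    have ev: "eventually (\<lambda>r. F a = F r) (at_right a)"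
      unfolding eventually_at_right_field F_def using False by (intro exI[of _ 0]) auto
    have "(F \<longlongrightarrow> F a) (at_right a)" using tendsto_cong[OF ev, of "F a"] by simp
    then show ?thesis unfolding continuous_within by simp
  qed
  have Ioc: "emeasure \<mu> {u<..v} = ennreal (F v - F u)" if "u \<le> v" for u v
    unfolding \<mu>_def using that Fmono Frc by (intro emeasure_interval_measure_Ioc) auto
  have sets\<mu>: "sets \<mu> = sets borel" unfolding \<mu>_def by simp
  have frc: "(f \<longlongrightarrow> f s) (at_right s)" if "0 \<le> s" for s
    unfolding f_def using cx cl that unfolding cadlag_def by (auto intro!: tendsto_diff tendsto_vec_nth)
  have fnn: "0 \<le> f s" if "0 \<le> s" for s using lx[OF that] unfolding f_def by simp
  have fK: "K s - (K t - \<epsilon>) \<le> f s" if "s \<in> {0..t}" for s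
    using hb[OF that] xyk[of s] that unfolding f_def K_def by simp
  obtain Bx where Bx: "\<And>s. s \<in> {0..t} \<Longrightarrow> norm (x s) \<le> Bx" using cadlag_bounded[OF cx] by blast
  obtain Bl where Bl: "\<And>s. s \<in> {0..t} \<Longrightarrow> norm (l s) \<le> Bl" using cadlag_bounded[OF cl] by blast
  have fB: "\<bar>f s\<bar> \<le> Bx + Bl" if "s \<in> {0..t}" for s
  proof -
    have "\<bar>x s $ i\<bar> \<le> Bx" using Bx[OF that] component_le_norm_cart[of "x s" i] by linarith
    moreover have "\<bar>l s $ i\<bar> \<le> Bl" using Bl[OF that] component_le_norm_cart[of "l s" i] by linarith
    ultimately show ?thesis unfolding f_def by linarith
  qed
  have B0: "0 \<le> Bx + Bl" using fB[of 0] t by auto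
  have meas: "(\<lambda>s. indicator {0..t} s *\<^sub>R f s) \<in> borel_measurable \<mu>"
  proof -
    have 1: "(\<lambda>s. indicator {0..t} s * f s) \<in> borel_measurable borel"
      by (rule rc_measurable) (use frc in auto)
    have 2: "borel_measurable \<mu> = borel_measurable borel"
      by (rule measurable_cong_sets) (simp_all add: sets\<mu>)
    have 3: "(\<lambda>s. indicator {0..t} s *\<^sub>R f s) = (\<lambda>s. indicator {0..t} s * f s)" by simp
    show ?thesis unfolding 3 2 by (rule 1)
  qed
  have fin: "emeasure \<mu> {0..t} < \<infinity>"
  proof -
    have "emeasure \<mu> {0..t} \<le> emeasure \<mu> {-1<..t}"
      by (rule emeasure_mono) (auto simp: sets\<mu>)
    also have "\<dots> = ennreal (F t - F (-1))" using Ioc t by simp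
    finally show ?thesis using le_less_trans by fastforce
  qed
  have integ: "integrable \<mu> (\<lambda>s. indicator {0..t} s *\<^sub>R f s)"
  proof (rule Bochner_Integration.integrable_bound[OF _ meas])
    show "integrable \<mu> (\<lambda>s. (Bx + Bl) * indicator {0..t} s)"
      using fin by (intro integrable_mult_right integrable_real_indicator) (auto simp: sets\<mu>)
    show "AE s in \<mu>. norm (indicator {0..t} s *\<^sub>R f s) \<le> norm ((Bx + Bl) * indicator {0..t} s :: real)"
      using fB B0 by (auto simp: indicator_def)
  qed
  have "integral\<^sup>L \<mu> (\<lambda>s. indicator {0..t} s *\<^sub>R f s) = 0"
    using int0 unfolding set_lebesgue_integral_def .
  then have AE0: "AE s in \<mu>. indicator {0..t} s *\<^sub>R f s = 0"
    using integral_nonneg_eq_0_iff_AE[OF integ] fnn by (auto simp: indicator_def)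
  define c where "c = K t - \<epsilon> / 2"
  define E where "E = {s \<in> {0..t}. c < K s}"
  define a where "a = Inf E"
  have tE: "t \<in> E" unfolding E_def c_def using t e by simp
  have Ene: "E \<noteq> {}" using tE by auto
  have Ebdd: "bdd_below E" unfolding E_def by (rule bdd_belowI[of _ 0]) auto
  have a0: "0 \<le> a" unfolding a_def using Ene by (intro cInf_greatest) (auto simp: E_def)
  have at: "a \<le> t" unfolding a_def using tE Ebdd by (rule cInf_lower)
  have c0: "0 \<le> c" unfolding c_def using Kt e unfolding K_def by simp
  have below: "F s \<le> c" if "s < a" for s
  proof (cases "s < 0")
    case True then show ?thesis unfolding F_def using K0 c0 by simp
  next
    case False
    have "s \<notin> E"
    proof
      assume "s \<in> E" then have "a \<le> s" unfolding a_def using Ebdd by (rule cInf_lower)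
      then show False using that by simp
    qed
    then have "K s \<le> c" unfolding E_def using False that at by auto
    then show ?thesis unfolding F_def using False by simp
  qed
  have Kge: "c \<le> K s" if s: "s \<in> {a..t}" for s
  proof (cases "a < s")
    case True
    then obtain e' where e': "e' \<in> E" "e' < s" using cInf_less_iff[OF Ene Ebdd] unfolding a_def by blast
    then have "K e' \<le> K s" using Kmono[of e' s] unfolding E_def by auto
    then show ?thesis using e' unfolding E_def by auto
  next
    case False
    then have sa: "s = a" using s by simp
    show ?thesis
    proof (cases "a = t")
      case True then show ?thesis using sa tE unfolding E_def by simp
    next
      case False
      then have "a < t" using at by simp
      have "eventually (\<lambda>r. c \<le> K r) (at_right a)"
        unfolding eventually_at_right_field
      proof (intro exI[of _ t] conjI allI impI)
        show "a < t" by fact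
        fix r assume r: "a < r" "r < t"
        then obtain e' where e': "e' \<in> E" "e' < r" using cInf_less_iff[OF Ene Ebdd] unfolding a_def by blast
        then have "K e' \<le> K r" using Kmono[of e' r] unfolding E_def by auto
        then show "c \<le> K r" using e' unfolding E_def by auto
      qed
      then have "c \<le> K a" using tendsto_lowerbound[OF Krc[OF a0]] by simp
      then show ?thesis using sa by simp
    qed
  qed
  have nz: "indicator {0..t} s *\<^sub>R f s \<noteq> 0" if "s \<in> {a..t}" for s
  proof -
    have "\<epsilon> / 2 \<le> f s" using fK[of s] Kge[OF that] that a0 unfolding c_def by auto
    then show ?thesis using that a0 e by (auto simp: indicator_def)
  qed
  have null: "emeasure \<mu> {a..t} = 0"
  proof -
    from AE0 obtain N where N: "{s \<in> space \<mu>. \<not> indicator {0..t} s *\<^sub>R f s = 0} \<subseteq> N" "emeasure \<mu> N = 0" "N \<in> sets \<mu>"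
      by (rule AE_E)
    have "{a..t} \<subseteq> N" using N(1) nz unfolding \<mu>_def by auto
    then have "emeasure \<mu> {a..t} \<le> emeasure \<mu> N" using N(3) by (rule emeasure_mono)
    then show ?thesis using N(2) by simp
  qed
  define A where "A = (\<lambda>n. {a - inverse (real (Suc n)) <.. t})"
  have Ameas: "range A \<subseteq> sets \<mu>" unfolding A_def by (auto simp: sets\<mu>)
  have Adec: "decseq A"
    unfolding decseq_def A_def
  proof (intro allI impI subsetI)
    fix m n :: nat and s assume mn: "m \<le> n" and s: "s \<in> {a - inverse (real (Suc n))<..t}"
    have "inverse (real (Suc n)) \<le> inverse (real (Suc m))" using mn by (simp add: le_imp_inverse_le)
    then show "s \<in> {a - inverse (real (Suc m))<..t}" using s unfolding greaterThanAtMost_iff by linarith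
  qed
  have Aval: "emeasure \<mu> (A n) = ennreal (F t - F (a - inverse (real (Suc n))))" for n
    unfolding A_def using at by (intro Ioc) (auto intro: order_trans[of _ a] simp: a0)
  have Afin: "emeasure \<mu> (A n) \<noteq> \<infinity>" for n using Aval by simp
  have Aint: "(\<Inter>n. A n) = {a..t}"
  proof
    show "{a..t} \<subseteq> (\<Inter>n. A n)"
    proof
      fix s assume s: "s \<in> {a..t}"
      have "a - inverse (real (Suc n)) < s" for n
        using s by (simp add: less_le_trans[of _ a])
      then show "s \<in> (\<Inter>n. A n)" using s unfolding A_def by auto
    qed
  next
    show "(\<Inter>n. A n) \<subseteq> {a..t}"
    proof
      fix s assume s: "s \<in> (\<Inter>n. A n)"
      have "a \<le> s"
      proof (rule ccontr)
        assume "\<not> a \<le> s"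
        then obtain n where "inverse (real (Suc n)) < a - s" using reals_Archimedean[of "a - s"] by auto
        moreover have "s \<in> A n" using s by auto
        ultimately show False unfolding A_def by auto
      qed
      moreover have "s \<le> t" using s unfolding A_def by auto
      ultimately show "s \<in> {a..t}" by simp
    qed
  qed
  have lim: "(\<lambda>n. emeasure \<mu> (A n)) \<longlonglongrightarrow> emeasure \<mu> {a..t}"
    using Lim_emeasure_decseq[OF Ameas Adec Afin] unfolding Aint .
  have lb: "ennreal (\<epsilon> / 2) \<le> emeasure \<mu> (A n)" for n
  proof -
    have "F (a - inverse (real (Suc n))) \<le> c" by (rule below) simp
    moreover have "F t = K t" unfolding F_def using t by simp
    ultimately have "\<epsilon> / 2 \<le> F t - F (a - inverse (real (Suc n)))" unfolding c_def by simp
    then show ?thesis unfolding Aval by (rule ennreal_leI)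
  qed
  have "ennreal (\<epsilon> / 2) \<le> emeasure \<mu> {a..t}"
    by (rule LIMSEQ_le_const[OF lim]) (use lb in blast)
  then show False using null e by simp
qed

lemma Vp_finite_bound:
  assumes "Vp p z a b \<noteq> \<infinity>" "p \<ge> 1" "subdivision a b us"
  shows "Vp p z a b = ennreal (enn2real (pvar p z a b) powr (1/p))"
    and "var_sum p z us powr (1/p) \<le> enn2real (pvar p z a b) powr (1/p)"
proof -
  have pf: "pvar p z a b \<noteq> \<infinity>" using assms(1) unfolding Vp_def by auto
  then show "Vp p z a b = ennreal (enn2real (pvar p z a b) powr (1/p))" unfolding Vp_def by simp
  have "ennreal (var_sum p z us) \<le> pvar p z a b" unfolding pvar_def using assms(3) by (intro SUP_upper) auto
  also have "\<dots> = ennreal (enn2real (pvar p z a b))" using pf by (simp add: ennreal_enn2real_if)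
  finally have "var_sum p z us \<le> enn2real (pvar p z a b)" by (subst (asm) ennreal_le_iff) auto
  then show "var_sum p z us powr (1/p) \<le> enn2real (pvar p z a b) powr (1/p)"
    using assms(2) by (intro powr_mono2) (auto simp: var_sum_nonneg)
qed

lemma Vp_le:
  assumes D: "D \<ge> 0" and p: "p \<ge> 1" and H: "\<And>us. subdivision a b us \<Longrightarrow> var_sum p z us powr (1/p) \<le> D"
  shows "Vp p z a b \<le> ennreal D"
proof -
  have "ennreal (var_sum p z us) \<le> ennreal (D powr p)" if "subdivision a b us" for us
  proof -
    have "var_sum p z us = (var_sum p z us powr (1/p)) powr p" using p by (simp add: powr_powr var_sum_nonneg)
    also have "\<dots> \<le> D powr p" using H[OF that] p by (intro powr_mono2) auto
    finally show ?thesis by (rule ennreal_leI)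
  qed
  then have pv: "pvar p z a b \<le> ennreal (D powr p)" unfolding pvar_def by (intro SUP_least) auto
  have pf: "pvar p z a b \<noteq> \<infinity>"
  proof
    assume "pvar p z a b = \<infinity>"
    then have "\<infinity> \<le> ennreal (D powr p)" using pv by simp
    then show False by (simp add: top_unique)
  qed
  have "ennreal (enn2real (pvar p z a b)) \<le> ennreal (D powr p)" using pv pf by (simp add: ennreal_enn2real_if)
  then have "enn2real (pvar p z a b) \<le> D powr p" by (subst (asm) ennreal_le_iff) auto
  then have "enn2real (pvar p z a b) powr (1/p) \<le> (D powr p) powr (1/p)" using p by (intro powr_mono2) auto
  also have "\<dots> = D" using D p by (simp add: powr_powr)
  finally show ?thesis unfolding Vp_def using pf by (simp add: ennreal_leI)
qed

lemma enn_arith: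
  fixes u v w z :: real and m n :: nat
  assumes "u \<ge> 0" "v \<ge> 0" "w \<ge> 0" "z \<ge> 0"
  shows "of_nat m * (ennreal u + ennreal v) + of_nat n * (ennreal w + ennreal z) = ennreal (real m * (u + v) + real n * (w + z))"
proof -
  have 1: "ennreal u + ennreal v = ennreal (u + v)" using assms by (intro ennreal_plus[symmetric])
  have 2: "ennreal w + ennreal z = ennreal (w + z)" using assms by (intro ennreal_plus[symmetric])
  have 3: "(of_nat m :: ennreal) * ennreal (u + v) = ennreal (real m * (u + v))"
    using assms by (simp only: ennreal_of_nat_eq_real_of_nat ennreal_mult[symmetric] of_nat_0_le_iff add_nonneg_nonneg)
  have 4: "(of_nat n :: ennreal) * ennreal (w + z) = ennreal (real n * (w + z))"
    using assms by (simp only: ennreal_of_nat_eq_real_of_nat ennreal_mult[symmetric] of_nat_0_le_iff add_nonneg_nonneg)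
  have 5: "ennreal (real m * (u + v)) + ennreal (real n * (w + z)) = ennreal (real m * (u + v) + real n * (w + z))"
    using assms by (intro ennreal_plus[symmetric]) auto
  show ?thesis unfolding 1 2 3 4 5 ..
qed

theorem corollary1:
  fixes l y l' y' x k x' k' :: "real \<Rightarrow> real^'d" and p T :: real
  assumes "p \<ge> 1"
    and "cadlag l" "cadlag y" "cadlag l'" "cadlag y'"
    and "\<forall>i. l 0 $ i \<le> y 0 $ i" "\<forall>i. l' 0 $ i \<le> y' 0 $ i"
    and "SP l y x k" "SP l' y' x' k'"
    and "T \<ge> 0"
  shows "(Vp_bar p (\<lambda>t. x t - x' t) 0 T
           \<le> of_nat (CARD('d) + 1) * Vp_bar p (\<lambda>t. y t - y' t) 0 T
             + of_nat CARD('d) * Vp_bar p (\<lambda>t. l t - l' t) 0 T)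
         \<and> (Vp_bar p (\<lambda>t. k t - k' t) 0 T
           \<le> of_nat CARD('d) * Vp_bar p (\<lambda>t. y t - y' t) 0 T
             + of_nat CARD('d) * Vp_bar p (\<lambda>t. l t - l' t) 0 T)"
proof -
  note p = assms(1) and cl = assms(2) and cl' = assms(4) and sp = assms(8) and sp' = assms(9) and T = assms(10)
  define d where "d = CARD('d)"
  have d0: "d > 0" unfolding d_def by simp
  define Y where "Y = (\<lambda>t. y t - y' t)"
  define Lz where "Lz = (\<lambda>t. l t - l' t)"
  define Kz where "Kz = (\<lambda>t. k t - k' t)"
  define Xz where "Xz = (\<lambda>t. x t - x' t)"
  show ?thesis
  proof (cases "Vp p Y 0 T = \<infinity> \<or> Vp p Lz 0 T = \<infinity>")
    case True
    then have "Vp_bar p Y 0 T = \<infinity> \<or> Vp_bar p Lz 0 T = \<infinity>" unfolding Vp_bar_def by auto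
    then have e1: "of_nat (CARD('d) + 1) * Vp_bar p (\<lambda>t. y t - y' t) 0 T + of_nat CARD('d) * Vp_bar p (\<lambda>t. l t - l' t) 0 T = \<infinity>"
         and e2: "of_nat CARD('d) * Vp_bar p (\<lambda>t. y t - y' t) 0 T + of_nat CARD('d) * Vp_bar p (\<lambda>t. l t - l' t) 0 T = \<infinity>"
      using d0 unfolding d_def Y_def Lz_def by (auto simp: ennreal_mult_eq_top_iff)
    show ?thesis by (simp only: e1 e2) simp
  next
    case False
    then have fY: "Vp p Y 0 T \<noteq> \<infinity>" and fL: "Vp p Lz 0 T \<noteq> \<infinity>" by auto
    define A where "A = enn2real (pvar p Y 0 T) powr (1/p)"
    define B where "B = enn2real (pvar p Lz 0 T) powr (1/p)"
    have A0: "A \<ge> 0" and B0: "B \<ge> 0" unfolding A_def B_def by auto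
    have VA: "Vp p Y 0 T = ennreal A" using fY unfolding Vp_def A_def by (simp split: if_splits)
    have VB: "Vp p Lz 0 T = ennreal B" using fL unfolding Vp_def B_def by (simp split: if_splits)
    have HA: "var_sum p Y us powr (1/p) \<le> A" if "subdivision 0 T us" for us
      using Vp_finite_bound(2)[OF fY p that] unfolding A_def .
    have HB: "var_sum p Lz us powr (1/p) \<le> B" if "subdivision 0 T us" for us
      using Vp_finite_bound(2)[OF fL p that] unfolding B_def .
    define a0 where "a0 = norm (Y 0)"
    define b0 where "b0 = norm (Lz 0)"
    have a00: "a0 \<ge> 0" and b00: "b0 \<ge> 0" unfolding a0_def b0_def by auto
    have spf: "\<And>t. 0 \<le> t \<Longrightarrow> x t = y t + k t \<and> (\<forall>i. l t $ i \<le> x t $ i)"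
      "k 0 = 0" "\<forall>i. mono_on {0..} (\<lambda>t. k t $ i)" using sp unfolding SP_def by auto
    have spf': "\<And>t. 0 \<le> t \<Longrightarrow> x' t = y' t + k' t \<and> (\<forall>i. l' t $ i \<le> x' t $ i)"
      "k' 0 = 0" "\<forall>i. mono_on {0..} (\<lambda>t. k' t $ i)" using sp' unfolding SP_def by auto
    have comp: "var_sum p (\<lambda>t. Kz t $ i) ts powr (1/p) \<le> b0 + a0 + (A + B)"
      if ts: "subdivision 0 T ts" for i ts
    proof -
      have HC: "var_sum p (\<lambda>t. (l t $ i - y t $ i) - (l' t $ i - y' t $ i)) us \<le> (A + B) powr p"
        if us: "subdivision 0 T us" for us
      proof -
        have eq: "(\<lambda>t. (l t $ i - y t $ i) - (l' t $ i - y' t $ i)) = (\<lambda>t. Lz t $ i + - (Y t $ i))"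
          unfolding Lz_def Y_def by (auto simp: algebra_simps)
        have "var_sum p (\<lambda>t. Lz t $ i + - (Y t $ i)) us powr (1/p)
            \<le> var_sum p (\<lambda>t. Lz t $ i) us powr (1/p) + var_sum p (\<lambda>t. - (Y t $ i)) us powr (1/p)"
          by (rule var_sum_triangle[OF p])
        also have "var_sum p (\<lambda>t. Lz t $ i) us powr (1/p) \<le> var_sum p Lz us powr (1/p)"
          using p by (intro powr_mono2 var_sum_comp_le) (auto simp: var_sum_nonneg)
        also have "var_sum p (\<lambda>t. - (Y t $ i)) us powr (1/p) \<le> var_sum p Y us powr (1/p)"
          unfolding var_sum_minus using p by (intro powr_mono2 var_sum_comp_le) (auto simp: var_sum_nonneg)
        finally have "var_sum p (\<lambda>t. Lz t $ i + - (Y t $ i)) us powr (1/p) \<le> B + A"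
          using HA[OF us] HB[OF us] by linarith
        then have "(var_sum p (\<lambda>t. Lz t $ i + - (Y t $ i)) us powr (1/p)) powr p \<le> (A + B) powr p"
          using p by (intro powr_mono2) auto
        then show ?thesis unfolding eq using p by (simp add: powr_powr var_sum_nonneg)
      qed
      have "var_sum p (\<lambda>t. k t $ i - k' t $ i) ts powr (1/p)
          \<le> \<bar>(l 0 $ i - y 0 $ i) - (l' 0 $ i - y' 0 $ i)\<bar> + (A + B)"
      proof (rule onedim[OF p _ _ _ _ _ _ _ _ _ HC ts])
        show "0 \<le> A + B" using A0 B0 by simp
        show "k s $ i \<le> k t $ i" if "0 \<le> s" "s \<le> t" for s t
          using mono_onD[OF spf(3)[rule_format, of i], of s t] that by auto
        show "k' s $ i \<le> k' t $ i" if "0 \<le> s" "s \<le> t" for s t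
          using mono_onD[OF spf'(3)[rule_format, of i], of s t] that by auto
        show "k 0 $ i = 0" using spf(2) by simp
        show "k' 0 $ i = 0" using spf'(2) by simp
        show "l t $ i - y t $ i \<le> k t $ i" if "0 \<le> t" for t
        proof -
          have "x t = y t + k t" "l t $ i \<le> x t $ i" using spf(1)[OF that] by auto
          then show ?thesis by simp
        qed
        show "l' t $ i - y' t $ i \<le> k' t $ i" if "0 \<le> t" for t
        proof -
          have "x' t = y' t + k' t" "l' t $ i \<le> x' t $ i" using spf'(1)[OF that] by auto
          then show ?thesis by simp
        qed
        show "k t $ i < \<epsilon> \<or> (\<exists>u\<in>{0..t}. k t $ i - \<epsilon> < l u $ i - y u $ i)" if "0 \<le> t" "0 < \<epsilon>" for t \<epsilon>
          by (rule sp_witness[OF sp cl that])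
        show "k' t $ i < \<epsilon> \<or> (\<exists>u\<in>{0..t}. k' t $ i - \<epsilon> < l' u $ i - y' u $ i)" if "0 \<le> t" "0 < \<epsilon>" for t \<epsilon>
          by (rule sp_witness[OF sp' cl' that])
      qed
      also have "\<bar>(l 0 $ i - y 0 $ i) - (l' 0 $ i - y' 0 $ i)\<bar> \<le> b0 + a0"
      proof -
        have "\<bar>(l 0 $ i - y 0 $ i) - (l' 0 $ i - y' 0 $ i)\<bar> \<le> \<bar>Lz 0 $ i\<bar> + \<bar>Y 0 $ i\<bar>"
          unfolding Lz_def Y_def by simp
        also have "\<dots> \<le> b0 + a0" unfolding a0_def b0_def using component_le_norm_cart by (intro add_mono) auto
        finally show ?thesis .
      qed
      finally show ?thesis unfolding Kz_def by simp
    qed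
    have Kbound: "var_sum p Kz ts powr (1/p) \<le> real d * (b0 + a0 + (A + B))" if ts: "subdivision 0 T ts" for ts
    proof -
      have "var_sum p Kz ts powr (1/p) \<le> (\<Sum>i\<in>UNIV. var_sum p (\<lambda>t. Kz t $ i) ts powr (1/p))"
        by (rule var_sum_components[OF p])
      also have "\<dots> \<le> (\<Sum>i\<in>(UNIV::'d set). b0 + a0 + (A + B))" by (intro sum_mono comp[OF ts])
      also have "\<dots> = real d * (b0 + a0 + (A + B))" unfolding d_def by simp
      finally show ?thesis .
    qed
    have Xbound: "var_sum p Xz ts powr (1/p) \<le> A + real d * (b0 + a0 + (A + B))" if ts: "subdivision 0 T ts" for ts
    proof -
      have "var_sum p Xz ts = var_sum p (\<lambda>t. Y t + Kz t) ts"
      proof (rule var_sum_cong)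
        fix t assume "t \<in> set ts"
        then have t: "0 \<le> t" using subdivision_set(1)[OF ts] by auto
        show "Xz t = Y t + Kz t" unfolding Xz_def Y_def Kz_def using spf(1)[OF t] spf'(1)[OF t] by simp
      qed
      also have "\<dots> powr (1/p) \<le> var_sum p Y ts powr (1/p) + var_sum p Kz ts powr (1/p)"
        by (rule var_sum_triangle[OF p])
      finally show ?thesis using HA[OF ts] Kbound[OF ts] by linarith
    qed
    have D0: "0 \<le> real d * (b0 + a0 + (A + B))" using A0 B0 a00 b00 by simp
    have VK: "Vp p Kz 0 T \<le> ennreal (real d * (b0 + a0 + (A + B)))" by (rule Vp_le[OF D0 p Kbound])
    have VX: "Vp p Xz 0 T \<le> ennreal (A + real d * (b0 + a0 + (A + B)))" by (rule Vp_le[OF _ p Xbound]) (use D0 A0 in simp)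
    have K0: "Kz 0 = 0" unfolding Kz_def using spf(2) spf'(2) by simp
    have X0: "norm (Xz 0) = a0" unfolding Xz_def a0_def Y_def using spf(1)[of 0] spf'(1)[of 0] spf(2) spf'(2) by simp
    have R1: "of_nat (d + 1) * Vp_bar p Y 0 T + of_nat d * Vp_bar p Lz 0 T
        = ennreal (real (d + 1) * (A + a0) + real d * (B + b0))"
      unfolding Vp_bar_def VA VB a0_def[symmetric] b0_def[symmetric] using A0 B0 a00 b00 by (intro enn_arith)
    have R2: "of_nat d * Vp_bar p Y 0 T + of_nat d * Vp_bar p Lz 0 T
        = ennreal (real d * (A + a0) + real d * (B + b0))"
      unfolding Vp_bar_def VA VB a0_def[symmetric] b0_def[symmetric] using A0 B0 a00 b00 by (intro enn_arith)
    have "Vp_bar p Kz 0 T \<le> ennreal (real d * (A + a0) + real d * (B + b0))"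
    proof -
      have "Vp_bar p Kz 0 T = Vp p Kz 0 T" unfolding Vp_bar_def using K0 by simp
      also have "\<dots> \<le> ennreal (real d * (b0 + a0 + (A + B)))" by (rule VK)
      also have "real d * (b0 + a0 + (A + B)) = real d * (A + a0) + real d * (B + b0)" by (simp add: algebra_simps)
      finally show ?thesis .
    qed
    moreover have "Vp_bar p Xz 0 T \<le> ennreal (real (d + 1) * (A + a0) + real d * (B + b0))"
    proof -
      have "Vp_bar p Xz 0 T = Vp p Xz 0 T + ennreal a0" unfolding Vp_bar_def using X0 by simp
      also have "\<dots> \<le> ennreal (A + real d * (b0 + a0 + (A + B))) + ennreal a0" using VX by (rule add_right_mono)
      also have "\<dots> = ennreal (A + real d * (b0 + a0 + (A + B)) + a0)" using D0 A0 a00 by (simp add: ennreal_plus)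
      also have "A + real d * (b0 + a0 + (A + B)) + a0 = real (d + 1) * (A + a0) + real d * (B + b0)"
        by (simp add: algebra_simps)
      finally show ?thesis .
    qed
    ultimately show ?thesis using R1 R2 unfolding d_def Y_def Lz_def Kz_def Xz_def by simp
  qed
qed

end
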